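(* Let $q$ be an odd prime power, let $\mathcal C$ be an irreducible conic of $\mathrm{PG}(2,q^2)$, let $\mathcal B$ be a Baer subplane of $\mathrm{PG}(2,q^2)$, and let $\mathcal E$ be the set of points of $\mathrm{PG}(2,q^2)$ external to $\mathcal C$. Then $|\mathcal E\cap\mathcal B|\geq\frac{q^2-3}{2}$.
   Context: A Baer subplane of $\mathrm{PG}(2,q^2)$ is a subplane of order $q$ (e.g. the canonically embedded $\mathrm{PG}(2,q)$). A point not on $\mathcal C$ is external to $\mathcal C$ if it lies on two tangent lines to $\mathcal C$. *)

theory Defs
  imports Complex_Main "HOL-Computational_Algebra.Primes"
begin

type_synonym 'a vec3 = "'a \<times> 'a \<times> 'a"

definition smul3 :: "'a::field \<Rightarrow> 'a vec3 \<Rightarrow> 'a vec3" where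
  "smul3 c v = (case v of (x, y, z) \<Rightarrow> (c * x, c * y, c * z))"

definition dot3 :: "'a::field vec3 \<Rightarrow> 'a vec3 \<Rightarrow> 'a" where
  "dot3 u v = (case u of (a, b, c) \<Rightarrow> case v of (x, y, z) \<Rightarrow> a * x + b * y + c * z)"

definition pt :: "'a::field vec3 \<Rightarrow> 'a vec3 set" where
  "pt v = {smul3 c v | c. c \<noteq> 0}"

definition pg_points :: "'a::field vec3 set set" where
  "pg_points = {pt v | v. v \<noteq> (0, 0, 0)}"

definition pg_line :: "'a::field vec3 \<Rightarrow> 'a vec3 set set" where
  "pg_line l = {pt v | v. v \<noteq> (0, 0, 0) \<and> dot3 l v = 0}"

definition pg_lines :: "'a::field vec3 set set set" where
  "pg_lines = {pg_line l | l. l \<noteq> (0, 0, 0)}"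

definition qform :: "'a::field \<times> 'a \<times> 'a \<times> 'a \<times> 'a \<times> 'a \<Rightarrow> 'a vec3 \<Rightarrow> 'a" where
  "qform k v = (case k of (a, b, c, d, e, f) \<Rightarrow> case v of (x, y, z) \<Rightarrow>
      a * x^2 + b * y^2 + c * z^2 + d * x * y + e * x * z + f * y * z)"

text \<open>Determinant of the (doubled) symmetric matrix of the form
  [[2a,d,e],[d,2b,f],[e,f,2c]]; in odd characteristic the conic is
  irreducible (non-degenerate) iff this is nonzero.\<close>

definition qdet :: "'a::field \<times> 'a \<times> 'a \<times> 'a \<times> 'a \<times> 'a \<Rightarrow> 'a" where
  "qdet k = (case k of (a, b, c, d, e, f) \<Rightarrow>
      2*a * (2*b * 2*c - f * f) - d * (d * 2*c - f * e) + e * (d * f - 2*b * e))"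

definition irreducible_conic :: "'a::field vec3 set set \<Rightarrow> bool" where
  "irreducible_conic C \<longleftrightarrow>
     (\<exists>k. qdet k \<noteq> 0 \<and> C = {pt v | v. v \<noteq> (0, 0, 0) \<and> qform k v = 0})"

definition tangent_line :: "'a::field vec3 set set \<Rightarrow> 'a vec3 set set \<Rightarrow> bool" where
  "tangent_line C l \<longleftrightarrow> l \<in> pg_lines \<and> card (l \<inter> C) = 1"

definition external_points :: "'a::field vec3 set set \<Rightarrow> 'a vec3 set set" where
  "external_points C = {P \<in> pg_points. P \<notin> C \<and>
      card {l. tangent_line C l \<and> P \<in> l} = 2}"

definition subplane_of_order :: "nat \<Rightarrow> 'a::field vec3 set set \<Rightarrow> bool" where
  "subplane_of_order n B \<longleftrightarrow>
     B \<subseteq> pg_points \<and>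
     (\<exists>Q \<subseteq> B. card Q = 4 \<and> (\<forall>l \<in> pg_lines. card (l \<inter> Q) \<le> 2)) \<and>
     (\<forall>l1 \<in> pg_lines. \<forall>l2 \<in> pg_lines. l1 \<noteq> l2 \<and> 2 \<le> card (l1 \<inter> B) \<and> 2 \<le> card (l2 \<inter> B)
         \<longrightarrow> l1 \<inter> l2 \<subseteq> B) \<and>
     (\<forall>l \<in> pg_lines. 2 \<le> card (l \<inter> B) \<longrightarrow> card (l \<inter> B) = n + 1)"

definition prime_power :: "nat \<Rightarrow> bool" where
  "prime_power q \<longleftrightarrow> (\<exists>p k. prime p \<and> 0 < k \<and> q = p ^ k)"

end

theory Submission
  imports Defs
begin

definition vadd :: "'a::field vec3 \<Rightarrow> 'a vec3 \<Rightarrow> 'a vec3" where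
  "vadd u v = (case u of (a,b,c) \<Rightarrow> case v of (x,y,z) \<Rightarrow> (a+x, b+y, c+z))"
definition cross3 :: "'a::field vec3 \<Rightarrow> 'a vec3 \<Rightarrow> 'a vec3" where
  "cross3 u v = (case u of (a,b,c) \<Rightarrow> case v of (x,y,z) \<Rightarrow> (b*z - c*y, c*x - a*z, a*y - b*x))"
definition det3 :: "'a::field vec3 \<Rightarrow> 'a vec3 \<Rightarrow> 'a vec3 \<Rightarrow> 'a" where
  "det3 u v w = dot3 u (cross3 v w)"
definition lin2 :: "'a::field \<Rightarrow> 'a vec3 \<Rightarrow> 'a \<Rightarrow> 'a vec3 \<Rightarrow> 'a vec3" where
  "lin2 a u b v = vadd (smul3 a u) (smul3 b v)"

lemma smul3_simp[simp]: "smul3 c (x,y,z) = (c*x, c*y, c*z)" by (simp add: smul3_def)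
lemma dot3_simp[simp]: "dot3 (a,b,c) (x,y,z) = a*x + b*y + c*z" by (simp add: dot3_def)
lemma vadd_simp[simp]: "vadd (a,b,c) (x,y,z) = (a+x, b+y, c+z)" by (simp add: vadd_def)
lemma cross3_simp[simp]: "cross3 (a,b,c) (x,y,z) = (b*z - c*y, c*x - a*z, a*y - b*x)" by (simp add: cross3_def)
lemma lin2_simp[simp]: "lin2 r (a,b,c) s (x,y,z) = (r*a+s*x, r*b+s*y, r*c+s*z)" by (simp add: lin2_def)

lemma det3_simp[simp]: "det3 (a,b,c) (d,e,f) (x,y,z) = a*(e*z - f*y) + b*(f*x - d*z) + c*(d*y - e*x)"
  by (simp add: det3_def algebra_simps)

lemma cross_zero_par:
  fixes u w :: "'a::field vec3"
  assumes "u \<noteq> (0,0,0)" "cross3 u w = (0,0,0)"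
  shows "\<exists>c. w = smul3 c u"
proof -
  obtain a b c where u: "u = (a,b,c)" by (cases u) auto
  obtain x y z where w: "w = (x,y,z)" by (cases w) auto
  have e: "b*z = c*y" "c*x = a*z" "a*y = b*x" using assms(2) by (auto simp: u w)
  show ?thesis
  proof (cases "a \<noteq> 0")
    case True
    then show ?thesis using e by (auto simp: u w field_simps intro!: exI[of _ "x/a"])
  next
    case F1: False
    show ?thesis
    proof (cases "b \<noteq> 0")
      case True
      then show ?thesis using e F1 by (auto simp: u w field_simps intro!: exI[of _ "y/b"])
    next
      case False
      then have "c \<noteq> 0" using F1 assms(1) u by auto
      then show ?thesis using e F1 False by (auto simp: u w field_simps intro!: exI[of _ "z/c"])
    qed
  qed
qed

lemma smul3_one[simp]: "smul3 1 v = v" by (cases v) (simp add: smul3_def)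
lemma smul3_smul3: "smul3 a (smul3 b v) = smul3 (a*b) v" by (cases v) (simp add: smul3_def)
lemma smul3_zero_iff: "smul3 c v = (0,0,0) \<longleftrightarrow> c = 0 \<or> v = (0,0,0)"
  by (cases v) (auto simp: smul3_def)

lemma cramer:
  fixes a b c e :: "'a::field vec3"
  shows "smul3 (det3 a b e) c = vadd (lin2 (det3 c b e) a (det3 a c e) b) (smul3 (det3 a b c) e)"
  by (cases a; cases b; cases c; cases e) (simp add: algebra_simps)

lemma perp3:
  fixes a b c l :: "'a::field vec3"
  shows "smul3 (det3 a b c) l = vadd (lin2 (dot3 l a) (cross3 b c) (dot3 l b) (cross3 c a)) (smul3 (dot3 l c) (cross3 a b))"
  by (cases a; cases b; cases c; cases l) (simp add: algebra_simps)

lemma cross_cross: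
  fixes u v l :: "'a::field vec3"
  shows "cross3 (cross3 u v) l = lin2 (dot3 l u) v (- dot3 l v) u"
  by (cases u; cases v; cases l) (simp add: algebra_simps)

abbreviation "z3 \<equiv> (0,0,0)"

lemma dot_smul[simp]: "dot3 l (smul3 c v) = c * dot3 l v"
  by (cases l; cases v) (simp add: algebra_simps)
lemma dot_lin2[simp]: "dot3 l (lin2 a u b v) = a * dot3 l u + b * dot3 l v"
  by (cases l; cases v; cases u) (simp add: algebra_simps)
lemma dot_comm: "dot3 u v = dot3 v u"
  by (cases u; cases v) (simp add: algebra_simps)
lemma cross_anti: "cross3 u v = z3 \<Longrightarrow> cross3 v u = z3"
  by (cases u; cases v) (auto simp: algebra_simps)
lemma cross_smul_l: "cross3 (smul3 c w) w = z3"
  by (cases w) (simp add: algebra_simps)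
lemma cross_self: "cross3 w w = z3"
  by (cases w) (simp add: algebra_simps)
lemma cross_smul2: "cross3 (smul3 c u) (smul3 d v) = smul3 (c*d) (cross3 u v)"
  by (cases u; cases v) (simp add: algebra_simps)
lemma det_cross_self: "det3 a a b = 0" "det3 b a b = 0" "dot3 (cross3 a b) a = 0" "dot3 (cross3 a b) b = 0"
  by (cases a; cases b; simp add: algebra_simps)+

lemma mem_pt: "w \<in> pt v \<longleftrightarrow> (\<exists>c. c \<noteq> 0 \<and> w = smul3 c v)"
  by (auto simp: pt_def)
lemma pt_self: "v \<in> pt v"
  unfolding mem_pt by (rule exI[of _ 1]) simp

lemma pt_eq_smul: assumes "c \<noteq> 0" shows "pt (smul3 c w) = pt w"
proof -
  have "x \<in> pt (smul3 c w) \<longleftrightarrow> x \<in> pt w" for x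
    using assms unfolding mem_pt smul3_smul3
    by (metis (no_types, lifting) divide_eq_0_iff nonzero_eq_divide_eq mult.commute no_zero_divisors)
  then show ?thesis by blast
qed

lemma pt_eq_iff:
  assumes "v \<noteq> z3" "w \<noteq> z3"
  shows "pt v = pt w \<longleftrightarrow> cross3 v w = z3"
proof
  assume "pt v = pt w"
  then have "v \<in> pt w" using pt_self by metis
  then obtain c where "v = smul3 c w" by (auto simp: mem_pt)
  then show "cross3 v w = z3" by (simp add: cross_smul_l)
next
  assume "cross3 v w = z3"
  then have "cross3 w v = z3" by (rule cross_anti)
  then obtain c where c: "v = smul3 c w" using cross_zero_par assms by blast
  then have "c \<noteq> 0" using assms by (auto simp: smul3_zero_iff)
  then show "pt v = pt w" using c pt_eq_smul by metis
qed

lemma pt_on_line: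
  assumes "v \<noteq> z3"
  shows "pt v \<in> pg_line l \<longleftrightarrow> dot3 l v = 0"
proof
  assume "pt v \<in> pg_line l"
  then obtain w where w: "pt v = pt w" "w \<noteq> z3" "dot3 l w = 0" by (auto simp: pg_line_def)
  then have "v \<in> pt w" using pt_self by metis
  then obtain c where "v = smul3 c w" by (auto simp: mem_pt)
  then show "dot3 l v = 0" using w by simp
next
  assume "dot3 l v = 0"
  then show "pt v \<in> pg_line l" using assms unfolding pg_line_def by blast
qed

lemma pg_line_elem: "P \<in> pg_line l \<Longrightarrow> \<exists>v. v \<noteq> z3 \<and> P = pt v \<and> dot3 l v = 0"
  by (auto simp: pg_line_def)
lemma pg_points_elem: "P \<in> pg_points \<Longrightarrow> \<exists>v. v \<noteq> z3 \<and> P = pt v"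
  by (auto simp: pg_points_def)
lemma pt_in_points: "v \<noteq> z3 \<Longrightarrow> pt v \<in> pg_points"
  unfolding pg_points_def by blast
lemma pg_line_sub: "pg_line l \<subseteq> pg_points"
  by (auto simp: pg_line_def pg_points_def)
lemma pg_lines_elem: "L \<in> pg_lines \<Longrightarrow> \<exists>l. l \<noteq> z3 \<and> L = pg_line l"
  by (auto simp: pg_lines_def)
lemma pg_line_in: "l \<noteq> z3 \<Longrightarrow> pg_line l \<in> pg_lines"
  unfolding pg_lines_def by blast

lemma det_zero_perp:
  assumes "l \<noteq> z3" "dot3 l a = 0" "dot3 l b = 0" "dot3 l c = 0"
  shows "det3 a b c = 0"
proof -
  have "smul3 (det3 a b c) l = z3" using perp3[of a b c l] assms
    by (cases a; cases b; cases c; simp)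
  then show ?thesis using assms(1) by (simp add: smul3_zero_iff)
qed

lemma span2:
  fixes a b c :: "'a::field vec3"
  assumes "cross3 a b \<noteq> z3" "det3 a b c = 0"
  shows "\<exists>\<alpha> \<beta>. c = lin2 \<alpha> a \<beta> b"
proof -
  have "\<exists>e. det3 a b e \<noteq> 0"
  proof (rule ccontr)
    assume "\<not> ?thesis"
    then have "det3 a b (1,0,0) = 0" "det3 a b (0,1,0) = 0" "det3 a b (0,0,1) = 0" by auto
    then show False using assms(1) by (cases a; cases b) (auto simp: algebra_simps)
  qed
  then obtain e where e: "det3 a b e \<noteq> 0" by blast
  have "smul3 (det3 a b e) c = lin2 (det3 c b e) a (det3 a c e) b"
    using cramer[of a b e c] assms(2) by (cases a; cases b; cases c; cases e) simp
  then have "c = lin2 (det3 c b e / det3 a b e) a (det3 a c e / det3 a b e) b"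
    using e by (cases a; cases b; cases c) (auto simp: field_simps)
  then show ?thesis by blast
qed

lemma indep3:
  fixes a b c :: "'a::field vec3"
  assumes "det3 a b c \<noteq> 0" "vadd (lin2 x a y b) (smul3 z c) = z3"
  shows "x = 0 \<and> y = 0 \<and> z = 0"
proof -
  obtain a1 a2 a3 where a: "a = (a1,a2,a3)" by (cases a) auto
  obtain b1 b2 b3 where b: "b = (b1,b2,b3)" by (cases b) auto
  obtain c1 c2 c3 where c: "c = (c1,c2,c3)" by (cases c) auto
  have e: "x*a1+y*b1+z*c1 = 0" "x*a2+y*b2+z*c2 = 0" "x*a3+y*b3+z*c3 = 0"
    using assms(2) by (auto simp: a b c)
  have d: "det3 a b c = a1*(b2*c3 - b3*c2) + a2*(b3*c1 - b1*c3) + a3*(b1*c2 - b2*c1)"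
    by (simp add: a b c)
  have "x * det3 a b c = 0"
  proof -
    have "x * det3 a b c = (x*a1+y*b1+z*c1)*(b2*c3 - b3*c2) + (x*a2+y*b2+z*c2)*(b3*c1 - b1*c3) + (x*a3+y*b3+z*c3)*(b1*c2 - b2*c1)"
      unfolding d by (simp add: algebra_simps)
    then show ?thesis using e by simp
  qed
  moreover have "y * det3 a b c = 0"
  proof -
    have "y * det3 a b c = (x*a1+y*b1+z*c1)*(c2*a3 - c3*a2) + (x*a2+y*b2+z*c2)*(c3*a1 - c1*a3) + (x*a3+y*b3+z*c3)*(c1*a2 - c2*a1)"
      unfolding d by (simp add: algebra_simps)
    then show ?thesis using e by simp
  qed
  moreover have "z * det3 a b c = 0"
  proof -
    have "z * det3 a b c = (x*a1+y*b1+z*c1)*(a2*b3 - a3*b2) + (x*a2+y*b2+z*c2)*(a3*b1 - a1*b3) + (x*a3+y*b3+z*c3)*(a1*b2 - a2*b1)"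
      unfolding d by (simp add: algebra_simps)
    then show ?thesis using e by simp
  qed
  ultimately show ?thesis using assms(1) by simp
qed

lemma cross_zero_l[simp]: "cross3 z3 w = z3" by (cases w) simp

lemma perp_pair:
  assumes "dot3 l u = 0" "dot3 l w = 0" "cross3 u w \<noteq> z3"
  shows "\<exists>c. l = smul3 c (cross3 u w)"
proof -
  have "cross3 (cross3 u w) l = z3" using cross_cross[of u w l] assms
    by (cases u; cases w; simp)
  then show ?thesis using cross_zero_par assms(3) by blast
qed

lemma line_basis:
  assumes "l \<noteq> z3"
  shows "\<exists>u w. dot3 l u = 0 \<and> dot3 l w = 0 \<and> cross3 u w \<noteq> z3"
proof -
  obtain a b c where l: "l = (a,b,c)" by (cases l) auto
  show ?thesis
  proof (cases "a = 0")
    case False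
    then show ?thesis unfolding l
      by (intro exI[of _ "(-b,a,0)"] exI[of _ "(-c,0,a)"]) (auto simp: algebra_simps)
  next
    case a: True
    show ?thesis
    proof (cases "b = 0")
      case False
      then show ?thesis unfolding l using a
        by (intro exI[of _ "(1,0,0)"] exI[of _ "(0,-c,b)"]) (auto simp: algebra_simps)
    next
      case True
      then show ?thesis unfolding l using a
        by (intro exI[of _ "(1,0,0)"] exI[of _ "(0,1,0)"]) (auto simp: algebra_simps)
    qed
  qed
qed

lemma cross_lin_w: "cross3 (lin2 1 u t w) w = cross3 u w"
  by (cases u; cases w) (simp add: algebra_simps)
lemma cross_lin_lin: "cross3 (lin2 1 u t w) (lin2 1 u s w) = smul3 (s - t) (cross3 u w)"
  by (cases u; cases w) (simp add: algebra_simps)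

lemma line_param:
  assumes "l \<noteq> z3" "dot3 l u = 0" "dot3 l w = 0" "cross3 u w \<noteq> z3"
  shows "pg_line l = insert (pt w) (range (\<lambda>t. pt (lin2 1 u t w)))"
    and "inj (\<lambda>t. pt (lin2 1 u t w))"
    and "pt w \<notin> range (\<lambda>t. pt (lin2 1 u t w))"
proof -
  have w0: "w \<noteq> z3" using assms(4) by (cases u) auto
  have l0: "lin2 1 u t w \<noteq> z3" for t
    using cross_lin_w[of u t w] assms(4) by auto
  show "inj (\<lambda>t. pt (lin2 1 u t w))"
  proof (rule injI)
    fix s t assume "pt (lin2 1 u s w) = pt (lin2 1 u t w)"
    then have "cross3 (lin2 1 u s w) (lin2 1 u t w) = z3" using pt_eq_iff l0 by blast
    then have "smul3 (t - s) (cross3 u w) = z3" by (simp add: cross_lin_lin)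
    then show "s = t" using assms(4) by (simp add: smul3_zero_iff)
  qed
  show "pt w \<notin> range (\<lambda>t. pt (lin2 1 u t w))"
  proof
    assume "pt w \<in> range (\<lambda>t. pt (lin2 1 u t w))"
    then obtain t where "pt w = pt (lin2 1 u t w)" by auto
    then have "cross3 (lin2 1 u t w) w = z3" using pt_eq_iff l0 w0 by metis
    then show False using assms(4) by (simp add: cross_lin_w)
  qed
  show "pg_line l = insert (pt w) (range (\<lambda>t. pt (lin2 1 u t w)))"
  proof
    show "insert (pt w) (range (\<lambda>t. pt (lin2 1 u t w))) \<subseteq> pg_line l"
      using assms w0 l0 by (auto simp: pt_on_line)
    show "pg_line l \<subseteq> insert (pt w) (range (\<lambda>t. pt (lin2 1 u t w)))"
    proof
      fix P assume "P \<in> pg_line l"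
      then obtain v where v: "v \<noteq> z3" "P = pt v" "dot3 l v = 0" using pg_line_elem by blast
      have "det3 u w v = 0" using det_zero_perp assms v by blast
      then obtain \<alpha> \<beta> where vab: "v = lin2 \<alpha> u \<beta> w" using span2 assms(4) by blast
      show "P \<in> insert (pt w) (range (\<lambda>t. pt (lin2 1 u t w)))"
      proof (cases "\<alpha> = 0")
        case True
        then have "v = smul3 \<beta> w" using vab by (cases u; cases w) simp
        then have "\<beta> \<noteq> 0" using v by (auto simp: smul3_zero_iff)
        then have "P = pt w" using v \<open>v = smul3 \<beta> w\<close> pt_eq_smul by metis
        then show ?thesis by simp
      next
        case False
        then have "v = smul3 \<alpha> (lin2 1 u (\<beta>/\<alpha>) w)" using vab by (cases u; cases w) (simp add: field_simps)
        then have "P = pt (lin2 1 u (\<beta>/\<alpha>) w)" using v False pt_eq_smul by metis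
        then show ?thesis by simp
      qed
    qed
  qed
qed

lemma line_card:
  assumes "l \<noteq> (z3 :: 'a::{field,finite} vec3)"
  shows "card (pg_line l) = card (UNIV :: 'a set) + 1"
proof -
  obtain u w where uw: "dot3 l u = 0" "dot3 l w = 0" "cross3 u w \<noteq> z3" using line_basis assms by blast
  note lp = line_param[OF assms uw]
  have "card (pg_line l) = card (range (\<lambda>t. pt (lin2 1 u t w))) + 1"
    using lp(1,3) by simp
  also have "card (range (\<lambda>t. pt (lin2 1 u t w))) = card (UNIV :: 'a set)"
    using lp(2) by (simp add: card_image)
  finally show ?thesis .
qed

lemma line_two_vecs:
  assumes "l \<noteq> z3"
  shows "\<exists>u w. u \<noteq> z3 \<and> w \<noteq> z3 \<and> dot3 l u = 0 \<and> dot3 l w = 0 \<and> cross3 u w \<noteq> z3"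
proof -
  obtain u w where uw: "dot3 l u = 0" "dot3 l w = 0" "cross3 u w \<noteq> z3" using line_basis assms by blast
  moreover have "u \<noteq> z3" "w \<noteq> z3" using uw(3) by (cases u; cases w; auto)+
  ultimately show ?thesis by blast
qed

lemma line_eq_par:
  assumes "l1 \<noteq> z3" "l2 \<noteq> z3"
  shows "pg_line l1 = pg_line l2 \<longleftrightarrow> cross3 l1 l2 = z3"
proof
  assume eq: "pg_line l1 = pg_line l2"
  obtain u w where uw: "u \<noteq> z3" "w \<noteq> z3" "dot3 l1 u = 0" "dot3 l1 w = 0" "cross3 u w \<noteq> z3"
    using line_two_vecs assms by blast
  have "dot3 l2 u = 0" "dot3 l2 w = 0" using eq uw pt_on_line by metis+
  then obtain c2 where c2: "l2 = smul3 c2 (cross3 u w)" using perp_pair uw by blast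
  obtain c1 where c1: "l1 = smul3 c1 (cross3 u w)" using perp_pair uw by blast
  show "cross3 l1 l2 = z3" unfolding c1 c2 cross_smul2 by (simp add: cross_self smul3_def)
next
  assume "cross3 l1 l2 = z3"
  then have "cross3 l2 l1 = z3" by (rule cross_anti)
  then obtain c where c: "l1 = smul3 c l2" using cross_zero_par assms by blast
  then have "c \<noteq> 0" using assms by (auto simp: smul3_zero_iff)
  have "pt v \<in> pg_line l1 \<longleftrightarrow> pt v \<in> pg_line l2" if "v \<noteq> z3" for v
    using that c \<open>c \<noteq> 0\<close> by (simp add: pt_on_line dot_comm[of "smul3 c l2"] dot_comm[of l2])
  then show "pg_line l1 = pg_line l2"
    by (metis (no_types, lifting) pg_line_elem subsetI subset_antisym)
qed

lemma join_line:
  assumes "cross3 v w \<noteq> z3"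
  shows "pt v \<in> pg_line (cross3 v w)" "pt w \<in> pg_line (cross3 v w)" "pg_line (cross3 v w) \<in> pg_lines"
proof -
  have "v \<noteq> z3" "w \<noteq> z3" using assms by (cases v; cases w; auto)+
  then show "pt v \<in> pg_line (cross3 v w)" "pt w \<in> pg_line (cross3 v w)"
    by (simp_all add: pt_on_line det_cross_self)
  show "pg_line (cross3 v w) \<in> pg_lines" using assms by (rule pg_line_in)
qed

lemma unique_line:
  assumes "L1 \<in> pg_lines" "L2 \<in> pg_lines" "P \<in> L1" "P \<in> L2" "R \<in> L1" "R \<in> L2" "P \<noteq> R"
  shows "L1 = L2"
proof -
  obtain l1 where l1: "l1 \<noteq> z3" "L1 = pg_line l1" using assms(1) pg_lines_elem by blast
  obtain l2 where l2: "l2 \<noteq> z3" "L2 = pg_line l2" using assms(2) pg_lines_elem by blast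
  obtain v where v: "v \<noteq> z3" "P = pt v" "dot3 l1 v = 0" using assms(3) l1 pg_line_elem by blast
  obtain w where w: "w \<noteq> z3" "R = pt w" "dot3 l1 w = 0" using assms(5) l1 pg_line_elem by blast
  have v2: "dot3 l2 v = 0" "dot3 l2 w = 0" using assms(4,6) l2 v w pt_on_line by metis+
  have cw: "cross3 v w \<noteq> z3" using pt_eq_iff v w assms(7) by metis
  obtain c1 where c1: "l1 = smul3 c1 (cross3 v w)" using perp_pair v(3) w(3) cw by blast
  obtain c2 where c2: "l2 = smul3 c2 (cross3 v w)" using perp_pair v2 cw by blast
  have "cross3 l1 l2 = z3" unfolding c1 c2 cross_smul2 by (simp add: cross_self smul3_def)
  then show ?thesis using line_eq_par l1 l2 by metis
qed

lemma line_nonempty: "L \<in> pg_lines \<Longrightarrow> \<exists>X. X \<in> L"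
  by (metis line_two_vecs pg_lines_elem pt_on_line)

lemma lines_meet:
  assumes "L1 \<in> pg_lines" "L2 \<in> pg_lines"
  shows "\<exists>X. X \<in> L1 \<and> X \<in> L2"
proof -
  obtain l1 where l1: "l1 \<noteq> z3" "L1 = pg_line l1" using assms(1) pg_lines_elem by blast
  obtain l2 where l2: "l2 \<noteq> z3" "L2 = pg_line l2" using assms(2) pg_lines_elem by blast
  show ?thesis
  proof (cases "cross3 l1 l2 = z3")
    case True
    then have "L1 = L2" using line_eq_par l1 l2 by metis
    then show ?thesis using line_nonempty assms by metis
  next
    case False
    have "pt (cross3 l1 l2) \<in> L1" "pt (cross3 l1 l2) \<in> L2"
      using False l1 l2 by (simp_all add: pt_on_line dot_comm[of l1] dot_comm[of l2] det_cross_self)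
    then show ?thesis by blast
  qed
qed

definition mv :: "'a::field \<times> 'a \<times> 'a \<times> 'a \<times> 'a \<times> 'a \<Rightarrow> 'a vec3 \<Rightarrow> 'a vec3" where
  "mv k v = (case k of (a, b, c, d, e, f) \<Rightarrow> case v of (x, y, z) \<Rightarrow>
     (2*a*x + d*y + e*z, d*x + 2*b*y + f*z, e*x + f*y + 2*c*z))"
definition bil :: "'a::field \<times> 'a \<times> 'a \<times> 'a \<times> 'a \<times> 'a \<Rightarrow> 'a vec3 \<Rightarrow> 'a vec3 \<Rightarrow> 'a" where
  "bil k u v = dot3 u (mv k v)"

lemma mv_simp[simp]: "mv (a, b, c, d, e, f) (x, y, z) = (2*a*x + d*y + e*z, d*x + 2*b*y + f*z, e*x + f*y + 2*c*z)"
  by (simp add: mv_def)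
lemma qform_simp[simp]: "qform (a, b, c, d, e, f) (x, y, z) = a * x^2 + b * y^2 + c * z^2 + d * x * y + e * x * z + f * y * z"
  by (simp add: qform_def)
lemma qdet_simp[simp]: "qdet (a, b, c, d, e, f) = 2*a * (2*b * 2*c - f * f) - d * (d * 2*c - f * e) + e * (d * f - 2*b * e)"
  by (simp add: qdet_def)

lemma bil_sym: "bil k u v = bil k v u"
  unfolding bil_def by (cases k rule: prod_cases6; cases u; cases v) (simp add: algebra_simps)
lemma bil_self: "bil k v v = 2 * qform k v"
  unfolding bil_def by (cases k rule: prod_cases6; cases v) (simp add: algebra_simps power2_eq_square)
lemma qform_smul[simp]: "qform k (smul3 c v) = c^2 * qform k v"
  by (cases k rule: prod_cases6; cases v) (simp add: algebra_simps power2_eq_square)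
lemma qform_lin2: "qform k (lin2 a u b v) = a^2 * qform k u + a*b*bil k u v + b^2 * qform k v"
  unfolding bil_def by (cases k rule: prod_cases6; cases u; cases v) (simp add: algebra_simps power2_eq_square)
lemma bil_lin2: "bil k u (lin2 a v b w) = a * bil k u v + b * bil k u w"
  unfolding bil_def by (cases k rule: prod_cases6; cases u; cases v; cases w) (simp add: algebra_simps)
lemma bil_smul: "bil k u (smul3 c v) = c * bil k u v"
  unfolding bil_def by (cases k rule: prod_cases6; cases u; cases v) (simp add: algebra_simps)
lemma dot_mv: "dot3 (mv k r) v = bil k r v"
  unfolding bil_def by (cases k rule: prod_cases6; cases r; cases v) (simp add: algebra_simps)
lemma mv_smul: "mv k (smul3 c v) = smul3 c (mv k v)"
  by (cases k rule: prod_cases6; cases v) (simp add: algebra_simps)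
lemma mv_lin2: "mv k (lin2 a u b v) = lin2 a (mv k u) b (mv k v)"
  by (cases k rule: prod_cases6; cases u; cases v) (simp add: algebra_simps)

lemma mv_cross: "mv k (cross3 (mv k r) (mv k s)) = smul3 (qdet k) (cross3 r s)"
  by (cases k rule: prod_cases6; cases r; cases s) (simp add: algebra_simps)

lemma mv_adj: "smul3 (qdet k) v = (case k of (a, b, c, d, e, f) \<Rightarrow> case mv k v of (X, Y, Z) \<Rightarrow>
   ((4*b*c - f*f)*X + (e*f - 2*c*d)*Y + (d*f - 2*b*e)*Z,
    (e*f - 2*c*d)*X + (4*a*c - e*e)*Y + (d*e - 2*a*f)*Z,
    (d*f - 2*b*e)*X + (d*e - 2*a*f)*Y + (4*a*b - d*d)*Z))"
  by (cases k rule: prod_cases6; cases v) (simp add: algebra_simps)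

lemma mv_inj:
  assumes "qdet k \<noteq> 0" "mv k v = z3"
  shows "v = z3"
proof -
  have "smul3 (qdet k) v = z3" using mv_adj[of k v] assms(2) by (cases k rule: prod_cases6) simp
  then show ?thesis using assms(1) by (simp add: smul3_zero_iff)
qed

lemma mv_par:
  assumes "qdet k \<noteq> 0" "cross3 (mv k r) (mv k s) = z3"
  shows "cross3 r s = z3"
proof -
  have "smul3 (qdet k) (cross3 r s) = z3" using mv_cross[of k r s] assms(2)
    by (cases k rule: prod_cases6) simp
  then show ?thesis using assms(1) by (simp add: smul3_zero_iff)
qed

definition Cset :: "'a::field \<times> 'a \<times> 'a \<times> 'a \<times> 'a \<times> 'a \<Rightarrow> 'a vec3 set set" where
  "Cset k = {pt v | v. v \<noteq> z3 \<and> qform k v = 0}"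

lemma C_mem:
  assumes "v \<noteq> z3"
  shows "pt v \<in> Cset k \<longleftrightarrow> qform k v = 0"
proof
  assume "pt v \<in> Cset k"
  then obtain w where w: "pt v = pt w" "w \<noteq> z3" "qform k w = 0" by (auto simp: Cset_def)
  then have "v \<in> pt w" using pt_self by metis
  then obtain c where "v = smul3 c w" by (auto simp: mem_pt)
  then show "qform k v = 0" using w by simp
next
  assume "qform k v = 0" then show "pt v \<in> Cset k" using assms unfolding Cset_def by blast
qed

lemma C_elem: "P \<in> Cset k \<Longrightarrow> \<exists>v. v \<noteq> z3 \<and> P = pt v \<and> qform k v = 0"
  by (auto simp: Cset_def)

lemma C_points: "Cset k \<subseteq> pg_points"
  by (auto simp: Cset_def pg_points_def)

lemma smul3_z3[simp]: "smul3 c z3 = z3" by simp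

lemma lin2_0a: "lin2 0 a b v = smul3 b v" by (cases a; cases v) simp
lemma lin2_0b: "lin2 a u 0 v = smul3 a u" by (cases u; cases v) simp
lemma cross_smul_r: "cross3 w (smul3 c w) = z3" by (cases w) (simp add: algebra_simps)

locale conic =
  fixes k :: "'a::{field,finite} \<times> 'a \<times> 'a \<times> 'a \<times> 'a \<times> 'a"
  assumes qdet_nz: "qdet k \<noteq> 0" and two_nz: "(2::'a) \<noteq> 0"
begin

abbreviation "C \<equiv> Cset k"

lemma mv_nz: "v \<noteq> z3 \<Longrightarrow> mv k v \<noteq> z3"
  using mv_inj qdet_nz by blast

lemma noline:
  assumes "qform k r = 0" "qform k s = 0" "bil k r s = 0"
  shows "cross3 r s = z3"
proof (rule ccontr)
  assume n: "cross3 r s \<noteq> z3"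
  have "dot3 (mv k r) r = 0" "dot3 (mv k r) s = 0" "dot3 (mv k s) r = 0" "dot3 (mv k s) s = 0"
    using assms by (simp_all add: dot_mv bil_self bil_sym[of k s r])
  then obtain \<alpha> \<beta> where "mv k r = smul3 \<alpha> (cross3 r s)" "mv k s = smul3 \<beta> (cross3 r s)"
    using perp_pair n by metis
  then have "cross3 (mv k r) (mv k s) = z3" by (simp add: cross_smul2 cross_self del: smul3_simp)
  then show False using mv_par qdet_nz n by blast
qed

lemma conic_det:
  assumes "qform k a = 0" "qform k b = 0" "qform k c = 0"
    and "cross3 a b \<noteq> z3" "cross3 a c \<noteq> z3" "cross3 b c \<noteq> z3"
  shows "det3 a b c \<noteq> 0"
proof
  assume "det3 a b c = 0"
  then obtain \<alpha> \<beta> where c: "c = lin2 \<alpha> a \<beta> b" using span2 assms(4) by blast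
  have "\<alpha> * \<beta> * bil k a b = 0" using assms(1-3) c by (simp add: qform_lin2)
  moreover have "\<alpha> \<noteq> 0"
  proof
    assume "\<alpha> = 0" then have "c = smul3 \<beta> b" using c lin2_0a by metis
    then show False using assms(6) cross_smul_r by metis
  qed
  moreover have "\<beta> \<noteq> 0"
  proof
    assume "\<beta> = 0" then have "c = smul3 \<alpha> a" using c lin2_0b by metis
    then show False using assms(5) cross_smul_r by metis
  qed
  ultimately have "bil k a b = 0" by simp
  then show False using noline assms by blast
qed

lemma line_conic_le2:
  assumes "L \<in> pg_lines"
  shows "card (L \<inter> C) \<le> 2"
proof (rule ccontr)
  assume "\<not> ?thesis"
  then have "3 \<le> card (L \<inter> C)" by simp
  then obtain S where S: "S \<subseteq> L \<inter> C" "card S = 3" by (meson obtain_subset_with_card_n)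
  then obtain P R X where PRX: "S = {P,R,X}" "P \<noteq> R" "R \<noteq> X" "P \<noteq> X" by (auto simp: card_3_iff)
  obtain l where l: "l \<noteq> z3" "L = pg_line l" using assms pg_lines_elem by blast
  have inL: "P \<in> L \<inter> C" "R \<in> L \<inter> C" "X \<in> L \<inter> C" using S PRX by auto
  obtain a where a: "a \<noteq> z3" "P = pt a" "qform k a = 0" using inL C_elem by blast
  obtain b where b: "b \<noteq> z3" "R = pt b" "qform k b = 0" using inL C_elem by blast
  obtain c where c: "c \<noteq> z3" "X = pt c" "qform k c = 0" using inL C_elem by blast
  have "dot3 l a = 0" using inL(1) a l pt_on_line by blast
  moreover have "dot3 l b = 0" using inL(2) b l pt_on_line by blast
  moreover have "dot3 l c = 0" using inL(3) c l pt_on_line by blast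
  ultimately
  have "det3 a b c = 0" using det_zero_perp l by blast
  moreover have "cross3 a b \<noteq> z3" "cross3 a c \<noteq> z3" "cross3 b c \<noteq> z3"
    using PRX a b c pt_eq_iff by metis+
  ultimately show False using conic_det a b c by blast
qed

lemma tangent_at:
  assumes "r \<noteq> z3" "qform k r = 0"
  shows "pg_line (mv k r) \<inter> C = {pt r}"
proof
  show "{pt r} \<subseteq> pg_line (mv k r) \<inter> C"
    using assms by (simp add: pt_on_line dot_mv bil_self C_mem)
  show "pg_line (mv k r) \<inter> C \<subseteq> {pt r}"
  proof
    fix P assume P: "P \<in> pg_line (mv k r) \<inter> C"
    then obtain s where s: "s \<noteq> z3" "P = pt s" "qform k s = 0" using C_elem by blast
    then have "bil k r s = 0" using P by (simp add: pt_on_line dot_mv)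
    then have "cross3 r s = z3" using noline assms s by blast
    then have "pt s = pt r" using pt_eq_iff assms s cross_anti by metis
    then show "P \<in> {pt r}" using s by simp
  qed
qed

lemma tangent_unique:
  assumes "L \<in> pg_lines" "L \<inter> C = {pt r}" "r \<noteq> z3"
  shows "L = pg_line (mv k r)"
proof -
  obtain l where l: "l \<noteq> z3" "L = pg_line l" using assms pg_lines_elem by blast
  have rC: "qform k r = 0" using assms C_mem by blast
  have rl: "dot3 l r = 0" using assms l pt_on_line by blast
  obtain u w where uw: "u \<noteq> z3" "w \<noteq> z3" "dot3 l u = 0" "dot3 l w = 0" "cross3 u w \<noteq> z3"
    using line_two_vecs l by blast
  obtain s where s: "s \<noteq> z3" "dot3 l s = 0" "cross3 r s \<noteq> z3"
  proof (cases "cross3 r u = z3")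
    case True
    have "cross3 r w \<noteq> z3"
    proof
      assume "cross3 r w = z3"
      then have "pt r = pt u" "pt r = pt w" using True pt_eq_iff assms uw by metis+
      then have "cross3 u w = z3" using pt_eq_iff uw by metis
      then show False using uw by simp
    qed
    then show ?thesis using that uw by blast
  next
    case False then show ?thesis using that uw by blast
  qed
  show ?thesis
  proof (cases "bil k r s = 0")
    case True
    have "pt r \<in> pg_line (mv k r)" "pt s \<in> pg_line (mv k r)"
      using True assms rC s by (simp_all add: pt_on_line dot_mv bil_self)
    moreover have "pt r \<in> L" "pt s \<in> L" using l rl s assms by (simp_all add: pt_on_line)
    moreover have "pt r \<noteq> pt s" using pt_eq_iff s assms by metis
    moreover have "pg_line (mv k r) \<in> pg_lines" using mv_nz assms pg_line_in by blast
    ultimately show ?thesis using unique_line assms(1) by metis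
  next
    case False
    define g where "g = lin2 (qform k s) r (- bil k r s) s"
    have "cross3 r g = smul3 (- bil k r s) (cross3 r s)"
      unfolding g_def by (cases r; cases s) (simp add: algebra_simps)
    then have cg: "cross3 r g \<noteq> z3" using False s by (simp add: smul3_zero_iff)
    then have g0: "g \<noteq> z3" by (cases r) auto
    have "qform k g = 0" unfolding g_def qform_lin2 using rC
      by (simp add: algebra_simps power2_eq_square)
    moreover have "dot3 l g = 0" unfolding g_def using rl s by simp
    ultimately have "pt g \<in> L \<inter> C" using g0 l by (simp add: pt_on_line C_mem)
    then have "pt g = pt r" using assms by blast
    then show ?thesis using pt_eq_iff g0 assms cg cross_anti by metis
  qed
qed

end



definition rep :: "'a::field vec3 set \<Rightarrow> 'a vec3" where
  "rep P = (SOME v. v \<noteq> z3 \<and> P = pt v)"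

lemma rep_pt:
  assumes "v \<noteq> z3"
  shows "rep (pt v) \<noteq> z3" "pt (rep (pt v)) = pt v"
proof -
  have "rep (pt v) \<noteq> z3 \<and> pt v = pt (rep (pt v))"
    unfolding rep_def using someI[of "\<lambda>w. w \<noteq> z3 \<and> pt v = pt w" v] assms by simp
  then show "rep (pt v) \<noteq> z3" "pt (rep (pt v)) = pt v" by auto
qed

context conic begin

definition pol :: "'a vec3 set \<Rightarrow> 'a vec3 set set" where
  "pol P = pg_line (mv k (rep P))"

lemma pol_pt:
  assumes "v \<noteq> z3"
  shows "pol (pt v) = pg_line (mv k v)"
proof -
  define w where "w = rep (pt v)"
  have w: "w \<noteq> z3" "pt w = pt v" unfolding w_def using rep_pt[OF assms] by simp_all
  then have "cross3 v w = z3" using pt_eq_iff assms cross_anti by metis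
  then obtain c where "w = smul3 c v" using cross_zero_par assms by blast
  then have "cross3 (mv k w) (mv k v) = z3" by (simp add: mv_smul cross_smul_l del: smul3_simp)
  then show ?thesis unfolding pol_def w_def[symmetric] using line_eq_par mv_nz w assms by metis
qed

lemma pol_in_lines: "P \<in> pg_points \<Longrightarrow> pol P \<in> pg_lines"
  using pg_points_elem pol_pt mv_nz pg_line_in by metis

lemma pol_inj:
  assumes "P \<in> pg_points" "R \<in> pg_points" "pol P = pol R"
  shows "P = R"
proof -
  obtain v where v: "v \<noteq> z3" "P = pt v" using assms pg_points_elem by blast
  obtain w where w: "w \<noteq> z3" "R = pt w" using assms pg_points_elem by blast
  have "pg_line (mv k v) = pg_line (mv k w)" using assms v w pol_pt by metis
  then have "cross3 (mv k v) (mv k w) = z3" using line_eq_par mv_nz v w by metis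
  then have "cross3 v w = z3" using mv_par qdet_nz by blast
  then show ?thesis using pt_eq_iff v w by metis
qed

lemma pol_sym:
  assumes "P \<in> pg_points" "R \<in> pg_points"
  shows "P \<in> pol R \<longleftrightarrow> R \<in> pol P"
proof -
  obtain v where v: "v \<noteq> z3" "P = pt v" using assms pg_points_elem by blast
  obtain w where w: "w \<noteq> z3" "R = pt w" using assms pg_points_elem by blast
  show ?thesis using v w by (simp add: pol_pt pt_on_line dot_mv bil_sym[of k v w])
qed

lemma pol_C:
  assumes "R \<in> C"
  shows "pol R \<inter> C = {R}" "pol R \<in> pg_lines"
proof -
  obtain r where r: "r \<noteq> z3" "R = pt r" "qform k r = 0" using assms C_elem by blast
  show "pol R \<inter> C = {R}" using r tangent_at pol_pt by simp
  show "pol R \<in> pg_lines" using pol_in_lines assms C_points by blast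
qed

lemma tangent_iff: "tangent_line C L \<longleftrightarrow> L \<in> pol ` C"
proof
  assume "tangent_line C L"
  then have L: "L \<in> pg_lines" "card (L \<inter> C) = 1" by (auto simp: tangent_line_def)
  then obtain R where R: "L \<inter> C = {R}" by (meson card_1_singletonE)
  then have "R \<in> C" by blast
  then obtain r where r: "r \<noteq> z3" "R = pt r" "qform k r = 0" using C_elem by blast
  then have "L = pg_line (mv k r)" using tangent_unique L R by blast
  then have "L = pol R" using pol_pt r by simp
  then show "L \<in> pol ` C" using \<open>R \<in> C\<close> by blast
next
  assume "L \<in> pol ` C"
  then obtain R where "R \<in> C" "L = pol R" by blast
  then show "tangent_line C L" using pol_C by (simp add: tangent_line_def)
qed

lemma inj_pol_C: "inj_on pol C"
  using pol_inj C_points by (meson inj_onI subsetD)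

lemma tangents_eq: "{L. tangent_line C L} = pol ` C"
  using tangent_iff by blast

lemma card_tangents: "card {L. tangent_line C L} = card C"
  unfolding tangents_eq using inj_pol_C by (simp add: card_image)

lemma tau_eq:
  assumes "P \<in> pg_points"
  shows "card {L. tangent_line C L \<and> P \<in> L} = card (C \<inter> pol P)"
proof -
  have "{L. tangent_line C L \<and> P \<in> L} = pol ` (C \<inter> pol P)"
  proof (intro set_eqI iffI)
    fix L assume "L \<in> {L. tangent_line C L \<and> P \<in> L}"
    then have L: "L \<in> pol ` C" "P \<in> L" using tangent_iff by auto
    then obtain R where R: "R \<in> C" "L = pol R" by blast
    then have "R \<in> pol P" using pol_sym[of P R] assms C_points L(2) by blast
    then show "L \<in> pol ` (C \<inter> pol P)" using R by blast
  next
    fix L assume "L \<in> pol ` (C \<inter> pol P)"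
    then obtain R where R: "R \<in> C" "R \<in> pol P" "L = pol R" by blast
    then have "P \<in> L" using pol_sym[of P R] assms C_points by blast
    moreover have "tangent_line C L" using R tangent_iff by blast
    ultimately show "L \<in> {L. tangent_line C L \<and> P \<in> L}" by blast
  qed
  moreover have "inj_on pol (C \<inter> pol P)" using inj_pol_C by (meson inj_on_subset Int_lower1)
  ultimately show ?thesis by (simp add: card_image)
qed

lemma tau_C:
  assumes "P \<in> C"
  shows "card {L. tangent_line C L \<and> P \<in> L} = 1"
proof -
  have "C \<inter> pol P = {P}" using pol_C(1)[OF assms] by blast
  moreover have "P \<in> pg_points" using assms C_points by blast
  ultimately show ?thesis using tau_eq by simp
qed

lemma tau_notC:
  assumes "P \<in> pg_points" "P \<notin> C"
  shows "card {L. tangent_line C L \<and> P \<in> L} = 0 \<or> card {L. tangent_line C L \<and> P \<in> L} = 2"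
proof -
  have le: "card (C \<inter> pol P) \<le> 2" using line_conic_le2[OF pol_in_lines[OF assms(1)]] by (simp add: Int_commute)
  have "card (C \<inter> pol P) \<noteq> 1"
  proof
    assume "card (C \<inter> pol P) = 1"
    then obtain R where R: "C \<inter> pol P = {R}" by (meson card_1_singletonE)
    then have "R \<in> C" by blast
    then obtain r where r: "r \<noteq> z3" "R = pt r" "qform k r = 0" using C_elem by blast
    have "pol P \<inter> C = {pt r}" using R r by blast
    then have "pol P = pg_line (mv k r)" using tangent_unique[OF pol_in_lines[OF assms(1)]] r by blast
    then have "pol P = pol R" using pol_pt r by simp
    then have "P = R" using pol_inj assms \<open>R \<in> C\<close> C_points by blast
    then show False using assms \<open>R \<in> C\<close> by simp
  qed
  then have "card (C \<inter> pol P) = 0 \<or> card (C \<inter> pol P) = 2" using le by linarith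
  then show ?thesis using tau_eq[OF assms(1)] by simp
qed

end



lemma invol_even:
  fixes S :: "'b set"
  assumes "finite S" "\<forall>x\<in>S. f x \<in> S \<and> f x \<noteq> x \<and> f (f x) = x"
  shows "even (card S)"
  using assms
proof (induction "card S" arbitrary: S rule: less_induct)
  case less
  show ?case
  proof (cases "S = {}")
    case True then show ?thesis by simp
  next
    case False
    then obtain x where x: "x \<in> S" by blast
    define S' where "S' = S - {x, f x}"
    have fx: "f x \<in> S" "f x \<noteq> x" using less.prems x by auto
    have sub: "{x, f x} \<subseteq> S" using x fx by blast
    have c2: "card {x, f x} = 2" using fx by simp
    have cS: "card S' = card S - 2" unfolding S'_def using sub less.prems(1) c2
      by (simp add: card_Diff_subset)
    have "card {x, f x} \<le> card S" using sub less.prems(1) by (simp add: card_mono)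
    then have ge: "card S \<ge> 2" using c2 by simp
    then have lt: "card S' < card S" using cS by simp
    have inv: "\<forall>y\<in>S'. f y \<in> S' \<and> f y \<noteq> y \<and> f (f y) = y"
    proof
      fix y assume y: "y \<in> S'"
      then have yS: "y \<in> S" "y \<noteq> x" "y \<noteq> f x" unfolding S'_def by auto
      have "f y \<noteq> x"
      proof
        assume "f y = x" then have "f (f y) = f x" by simp
        then show False using less.prems(2) yS by simp
      qed
      moreover have "f y \<noteq> f x"
      proof
        assume "f y = f x" then have "f (f y) = f (f x)" by simp
        then show False using less.prems(2) yS x by simp
      qed
      ultimately show "f y \<in> S' \<and> f y \<noteq> y \<and> f (f y) = y"
        using less.prems(2) yS unfolding S'_def by simp
    qed
    have fin: "finite S'" unfolding S'_def using less.prems(1) by simp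
    have "even (card S')" using less.hyps[OF lt fin inv] .
    moreover have "card S = card S' + 2" using cS ge by simp
    ultimately show ?thesis by simp
  qed
qed

lemma two_nz_field:
  assumes "odd (card (UNIV :: 'a::{field,finite} set))"
  shows "(2::'a) \<noteq> 0"
proof
  assume two: "(2::'a) = 0"
  have "\<forall>x\<in>(UNIV::'a set). x + 1 \<in> UNIV \<and> x + 1 \<noteq> x \<and> x + 1 + 1 = x"
  proof
    fix x :: 'a
    have "x + 1 + 1 = x + 2" by (simp add: algebra_simps)
    then show "x + 1 \<in> UNIV \<and> x + 1 \<noteq> x \<and> x + 1 + 1 = x" using two by simp
  qed
  then have "even (card (UNIV :: 'a set))" using invol_even[of "UNIV :: 'a set" "\<lambda>x. x + 1"] by simp
  then show False using assms by simp
qed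

lemma sq_image:
  fixes \<alpha> \<beta> :: "'a::{field,finite}"
  assumes "(2::'a) \<noteq> 0" "\<alpha> \<noteq> 0"
  shows "card (UNIV :: 'a set) + 1 \<le> 2 * card (range (\<lambda>x. \<alpha> * x^2 + \<beta>))"
proof -
  define f where "f = (\<lambda>x::'a. \<alpha> * x^2 + \<beta>)"
  define R where "R = range f"
  have fib: "card (f -` {y}) \<le> (if y = \<beta> then 1 else (2::nat))" for y
  proof (cases "f -` {y} = {}")
    case True then show ?thesis by simp
  next
    case False
    then obtain x1 where x1: "f x1 = y" by blast
    have sub: "f -` {y} \<subseteq> {x1, -x1}"
    proof
      fix x assume "x \<in> f -` {y}"
      then have "\<alpha> * x^2 + \<beta> = \<alpha> * x1^2 + \<beta>" using x1 unfolding f_def by simp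
      then have "\<alpha> * x^2 = \<alpha> * x1^2" by simp
      then have "x^2 = x1^2" using assms(2) by (metis mult_left_cancel)
      then have "x = x1 \<or> x = -x1" by (simp add: power2_eq_iff)
      then show "x \<in> {x1, -x1}" by blast
    qed
    show ?thesis
    proof (cases "y = \<beta>")
      case True
      then have "x1 = 0" using x1 assms(2) unfolding f_def by simp
      then have "f -` {y} \<subseteq> {0}" using sub by simp
      then have "card (f -` {y}) \<le> card {0::'a}" by (intro card_mono) auto
      then have "card (f -` {y}) \<le> 1" by simp
      then show ?thesis using True by simp
    next
      case False
      have "card (f -` {y}) \<le> card {x1, -x1}" using sub by (simp add: card_mono)
      also have "\<dots> \<le> 2" by (simp add: card_insert_le_m1)
      finally show ?thesis using False by simp
    qed
  qed
  have "UNIV = (\<Union>y\<in>R. f -` {y})" unfolding R_def by auto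
  then have "card (UNIV :: 'a set) \<le> (\<Sum>y\<in>R. card (f -` {y}))" by (metis card_UN_le finite)
  also have "\<dots> \<le> (\<Sum>y\<in>R. (if y = \<beta> then 1 else (2::nat)))" by (rule sum_mono) (use fib in auto)
  finally have le: "card (UNIV :: 'a set) \<le> (\<Sum>y\<in>R. (if y = \<beta> then 1 else (2::nat)))" .
  have eq: "(\<Sum>y\<in>R. (if y = \<beta> then 1 else (2::nat))) + 1 = 2 * card R"
  proof -
    have b: "\<beta> \<in> R" unfolding R_def f_def by (rule range_eqI[where x=0]) simp
    have "(\<Sum>y\<in>R. (if y = \<beta> then 1 else (2::nat))) = (if \<beta> = \<beta> then 1 else (2::nat)) + (\<Sum>y\<in>R - {\<beta>}. (if y = \<beta> then 1 else (2::nat)))"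
      using sum.remove[OF finite b] .
    then have "(\<Sum>y\<in>R. (if y = \<beta> then 1 else (2::nat))) = (\<Sum>y\<in>R - {\<beta>}. (if y = \<beta> then 1 else (2::nat))) + (1::nat)"
      by simp
    also have "(\<Sum>y\<in>R - {\<beta>}. (if y = \<beta> then 1 else (2::nat))) = (\<Sum>y\<in>R - {\<beta>}. 2::nat)"
      by (rule sum.cong) auto
    also have "\<dots> = 2 * (card R - 1)" using b by simp
    finally have s: "(\<Sum>y\<in>R. (if y = \<beta> then 1 else (2::nat))) = 2 * (card R - 1) + (1::nat)" .
    have "0 < card R" using b by (auto simp: card_gt_0_iff)
    then have "card R \<ge> 1" by linarith
    then show ?thesis using s by simp
  qed
  show ?thesis using le eq unfolding R_def f_def by simp
qed

lemma sq_meet: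
  fixes a b c :: "'a::{field,finite}"
  assumes "(2::'a) \<noteq> 0" "a \<noteq> 0" "b \<noteq> 0"
  shows "\<exists>x y. a * x^2 + b * y^2 + c = 0"
proof (rule ccontr)
  assume nex: "\<not> ?thesis"
  define R1 where "R1 = range (\<lambda>x::'a. a * x^2 + 0)"
  define R2 where "R2 = range (\<lambda>y::'a. (-b) * y^2 + (-c))"
  have c1: "card (UNIV :: 'a set) + 1 \<le> 2 * card R1" unfolding R1_def using sq_image assms by blast
  have c2: "card (UNIV :: 'a set) + 1 \<le> 2 * card R2" unfolding R2_def by (rule sq_image) (use assms in auto)
  have "R1 \<inter> R2 = {}"
  proof (rule ccontr)
    assume "R1 \<inter> R2 \<noteq> {}"
    then obtain x y where "a * x^2 + 0 = (-b) * y^2 + (-c)" unfolding R1_def R2_def by auto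
    then have "a * x^2 + b * y^2 + c = 0" by (simp add: algebra_simps)
    then show False using nex by blast
  qed
  then have "card (R1 \<union> R2) = card R1 + card R2" by (simp add: card_Un_disjoint)
  moreover have "card (R1 \<union> R2) \<le> card (UNIV :: 'a set)" by (simp add: card_mono)
  ultimately show False using c1 c2 by linarith
qed

lemma qform_lin3: "qform k (vadd (lin2 x u y v) w) = x^2 * qform k u + y^2 * qform k v + qform k w
   + x*y*bil k u v + x*bil k u w + y*bil k v w"
  unfolding bil_def by (cases k rule: prod_cases6; cases u; cases v; cases w) (simp add: algebra_simps power2_eq_square)
lemma bil_lin3: "bil k w (vadd (lin2 x u y v) w) = x * bil k w u + y * bil k w v + bil k w w"
  unfolding bil_def by (cases k rule: prod_cases6; cases u; cases v; cases w) (simp add: algebra_simps)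
lemma bil_z3: "bil k w z3 = 0"
  unfolding bil_def by (cases k rule: prod_cases6; cases w) simp

context conic begin

lemma exists_point: "\<exists>v. v \<noteq> z3 \<and> qform k v = 0"
proof (rule ccontr)
  assume "\<not> ?thesis"
  then have an: "\<And>v. v \<noteq> z3 \<Longrightarrow> qform k v \<noteq> 0" by blast
  define u :: "'a vec3" where "u = (1,0,0)"
  have u0: "u \<noteq> z3" unfolding u_def by simp
  obtain v w' where vw: "v \<noteq> z3" "w' \<noteq> z3" "dot3 (mv k u) v = 0" "dot3 (mv k u) w' = 0" "cross3 v w' \<noteq> z3"
    using line_two_vecs mv_nz u0 by blast
  have buv: "bil k u v = 0" using vw by (simp add: dot_mv)
  define w where "w = cross3 (mv k u) (mv k v)"
  have w0: "w \<noteq> z3"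
  proof
    assume "w = z3"
    then have "cross3 (mv k u) (mv k v) = z3" using w_def by simp
    then have "cross3 u v = z3" by (rule mv_par[OF qdet_nz])
    then obtain c where c: "v = smul3 c u" using cross_zero_par u0 by blast
    then have "c * (2 * qform k u) = 0" using buv by (simp add: bil_smul bil_self)
    then have "c = 0" using an u0 two_nz by simp
    then show False using c vw by (simp add: smul3_zero_iff)
  qed
  have buw: "bil k u w = 0" unfolding w_def dot_mv[symmetric]
    by (simp add: dot_comm[of "mv k u"] det_cross_self)
  have bvw: "bil k v w = 0" unfolding w_def dot_mv[symmetric]
    by (simp add: dot_comm[of "mv k v"] det_cross_self)
  obtain x y where xy: "qform k u * x^2 + qform k v * y^2 + qform k w = 0"
    using sq_meet two_nz an u0 vw(1) by blast
  define g where "g = vadd (lin2 x u y v) w"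
  have "qform k g = 0" unfolding g_def qform_lin3 using xy buv buw bvw by (simp add: algebra_simps)
  moreover have "g \<noteq> z3"
  proof
    assume "g = z3"
    then have "bil k w g = 0" by (simp add: bil_z3)
    then have "2 * qform k w = 0" unfolding g_def bil_lin3 using buw bvw
      by (simp add: bil_sym[of k w u] bil_sym[of k w v] bil_self)
    then show False using an w0 two_nz by simp
  qed
  ultimately show False using an by blast
qed

end



lemma exists_nonperp:
  assumes "v \<noteq> (z3::'a::field vec3)"
  shows "\<exists>l. l \<noteq> z3 \<and> dot3 l v \<noteq> 0"
proof -
  obtain a b c where v: "v = (a,b,c)" by (cases v) auto
  show ?thesis
  proof (cases "a = 0")
    case False then show ?thesis unfolding v by (intro exI[of _ "(1,0,0)"]) simp
  next
    case True
    show ?thesis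
    proof (cases "b = 0")
      case False then show ?thesis unfolding v by (intro exI[of _ "(0,1,0)"]) simp
    next
      case b: True
      then have "c \<noteq> 0" using True assms v by simp
      then show ?thesis unfolding v by (intro exI[of _ "(0,0,1)"]) simp
    qed
  qed
qed

lemma cross_r_lin2: "cross3 r (lin2 A r B x) = smul3 B (cross3 r x)"
  by (cases r; cases x) (simp add: algebra_simps)

lemma lin2_diff:
  assumes "lin2 A r B x = smul3 c (lin2 A' r B' y)"
  shows "vadd (lin2 (A - c*A') r B x) (smul3 (-(c*B')) y) = z3"
  using assms by (cases r; cases x; cases y) (simp add: algebra_simps)

lemma cross_zero_r[simp]: "cross3 r z3 = z3" by (cases r) simp

lemma lin2_0b': "lin2 A r 0 x = smul3 A r" by (cases r; cases x) simp

context conic begin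

lemma card_C: "card (UNIV :: 'a set) + 1 \<le> card C"
proof -
  obtain r where r: "r \<noteq> z3" "qform k r = 0" using exists_point by blast
  obtain l where l: "l \<noteq> z3" "dot3 l r \<noteq> 0" using exists_nonperp r by blast
  obtain u w where uw: "dot3 l u = 0" "dot3 l w = 0" "cross3 u w \<noteq> z3" using line_basis l by blast
  define h where "h = (\<lambda>t. lin2 1 u t w)"
  define X where "X = insert w (range h)"
  define g where "g = (\<lambda>x. lin2 (qform k x) r (- bil k r x) x)"
  have G1: "cross3 r x \<noteq> z3" if "x \<noteq> z3" "dot3 l x = 0" for x
  proof
    assume a: "cross3 r x = z3"
    have "cross3 x r = z3" using a by (rule cross_anti)
    with cross_zero_par[OF that(1)] obtain c where c: "r = smul3 c x" by blast
    have "dot3 l r = c * dot3 l x" unfolding c by (rule dot_smul)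
    with l(2) that(2) show False by simp
  qed
  have G2: "g x \<noteq> z3 \<and> qform k (g x) = 0" if "x \<noteq> z3" "dot3 l x = 0" for x
  proof
    show "qform k (g x) = 0" unfolding g_def qform_lin2 using r
      by (simp add: algebra_simps power2_eq_square)
    show "g x \<noteq> z3"
    proof (cases "bil k r x = 0")
      case False
      have "cross3 r (g x) = smul3 (- bil k r x) (cross3 r x)" unfolding g_def by (rule cross_r_lin2)
      then have "cross3 r (g x) \<noteq> z3" using False G1 that by (simp add: smul3_zero_iff)
      then show ?thesis by auto
    next
      case True
      have "qform k x \<noteq> 0"
      proof
        assume "qform k x = 0"
        then have "cross3 r x = z3" using noline r True by blast
        then show False using G1 that by blast
      qed
      moreover have "g x = smul3 (qform k x) r" unfolding g_def using True by (simp add: lin2_0b')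
      ultimately show ?thesis using r by (simp add: smul3_zero_iff)
    qed
  qed
  have G3: "pt (g x) \<noteq> pt (g y)" if H: "x \<noteq> z3" "dot3 l x = 0" "y \<noteq> z3" "dot3 l y = 0" "cross3 x y \<noteq> z3" for x y
  proof
    assume eq: "pt (g x) = pt (g y)"
    have gx: "g x \<noteq> z3" and gy: "g y \<noteq> z3" using G2 H by blast+
    have "cross3 (g y) (g x) = z3" using eq pt_eq_iff gx gy cross_anti by metis
    then obtain c where c: "g x = smul3 c (g y)" using cross_zero_par gy by blast
    have "c \<noteq> 0" using c gx by (auto simp: smul3_zero_iff)
    obtain c' where c': "l = smul3 c' (cross3 x y)" using perp_pair H(2,4,5) by blast
    have "dot3 l r = c' * det3 r x y" unfolding c' det3_def
      by (cases r; cases x; cases y) (simp add: algebra_simps)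
    then have dne: "det3 r x y \<noteq> 0" using l by auto
    have "vadd (lin2 (qform k x - c * qform k y) r (- bil k r x) x) (smul3 (-(c * (- bil k r y))) y) = z3"
      using c unfolding g_def by (rule lin2_diff)
    then have "- bil k r x = 0 \<and> -(c * (- bil k r y)) = 0" using indep3 dne by blast
    then have b0: "bil k r x = 0" "bil k r y = 0" using \<open>c \<noteq> 0\<close> by auto
    have "dot3 (mv k r) r = 0" "dot3 (mv k r) x = 0" "dot3 (mv k r) y = 0"
      using b0 r by (simp_all add: dot_mv bil_self)
    then have "det3 r x y = 0" using det_zero_perp mv_nz r by blast
    then show False using dne by simp
  qed
  have Xprop: "x \<noteq> z3 \<and> dot3 l x = 0" if "x \<in> X" for x
  proof -
    have w0: "w \<noteq> z3" using uw(3) by (cases u) auto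
    have "h t \<noteq> z3" for t using cross_lin_w[of u t w] uw(3) unfolding h_def by auto
    then show ?thesis using that w0 uw unfolding X_def h_def by auto
  qed
  have Xcross: "cross3 x y \<noteq> z3" if H: "x \<in> X" "y \<in> X" "x \<noteq> y" for x y
  proof -
    have hw: "cross3 (h t) w \<noteq> z3" for t unfolding h_def using cross_lin_w uw by metis
    have hh: "cross3 (h s) (h t) \<noteq> z3" if "h s \<noteq> h t" for s t
    proof -
      have "s \<noteq> t" using that by auto
      then show ?thesis unfolding h_def cross_lin_lin using uw by (simp add: smul3_zero_iff)
    qed
    show ?thesis
    proof (cases "x = w")
      case True
      then obtain t where "y = h t" using H unfolding X_def by auto
      then show ?thesis using hw[of t] True cross_anti by metis
    next
      case False
      then obtain s where s: "x = h s" using H unfolding X_def by auto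
      show ?thesis
      proof (cases "y = w")
        case True then show ?thesis using hw s by simp
      next
        case False
        then obtain t where t: "y = h t" using H unfolding X_def by auto
        then show ?thesis using hh[of s t] s H(3) by simp
      qed
    qed
  qed
  have inj: "inj_on (\<lambda>x. pt (g x)) X"
  proof (rule inj_onI, rule ccontr)
    fix x y assume xy: "x \<in> X" "y \<in> X" "pt (g x) = pt (g y)" "x \<noteq> y"
    have px: "x \<noteq> z3" "dot3 l x = 0" using Xprop[OF xy(1)] by auto
    have py: "y \<noteq> z3" "dot3 l y = 0" using Xprop[OF xy(2)] by auto
    have "cross3 x y \<noteq> z3" using Xcross[OF xy(1,2,4)] .
    then have "pt (g x) \<noteq> pt (g y)" using G3[OF px py] by simp
    then show False using xy(3) by simp
  qed
  have sub: "(\<lambda>x. pt (g x)) ` X \<subseteq> C"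
  proof
    fix P assume "P \<in> (\<lambda>x. pt (g x)) ` X"
    then obtain x where x: "x \<in> X" "P = pt (g x)" by blast
    have "x \<noteq> z3" "dot3 l x = 0" using Xprop[OF x(1)] by auto
    then have "g x \<noteq> z3" "qform k (g x) = 0" using G2 by blast+
    then show "P \<in> C" using x(2) C_mem by blast
  qed
  have cX: "card X = card (UNIV :: 'a set) + 1"
  proof -
    have "w \<notin> range h"
    proof
      assume "w \<in> range h"
      then obtain t where "w = h t" by auto
      then have "cross3 (h t) w = z3" by (simp add: cross_self)
      then show False using cross_lin_w uw unfolding h_def by metis
    qed
    moreover have "inj h"
    proof (rule injI)
      fix s t assume "h s = h t"
      then have "cross3 (h s) (h t) = z3" by (simp add: cross_self)
      then have "smul3 (t - s) (cross3 u w) = z3" unfolding h_def cross_lin_lin .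
      then show "s = t" using uw by (simp add: smul3_zero_iff)
    qed
    ultimately show ?thesis unfolding X_def by (simp add: card_image)
  qed
  have "card ((\<lambda>x. pt (g x)) ` X) = card X" using inj by (simp add: card_image)
  moreover have "card ((\<lambda>x. pt (g x)) ` X) \<le> card C" using sub by (simp add: card_mono)
  ultimately show ?thesis using cX by simp
qed

end



definition lc :: "'a::field vec3 \<Rightarrow> 'a vec3 \<Rightarrow> 'a vec3 \<Rightarrow> 'a vec3 \<Rightarrow> 'a vec3" where
  "lc p1 p2 p3 a = (case a of (x,y,z) \<Rightarrow> vadd (lin2 x p1 y p2) (smul3 z p3))"

lemma det_lc: "det3 (lc p1 p2 p3 a) (lc p1 p2 p3 b) (lc p1 p2 p3 c) = det3 p1 p2 p3 * det3 a b c"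
  unfolding lc_def by (cases p1; cases p2; cases p3; cases a; cases b; cases c) (simp add: algebra_simps)

lemma lc_e: "lc p1 p2 p3 (1,0,0) = p1" "lc p1 p2 p3 (0,1,0) = p2" "lc p1 p2 p3 (0,0,1) = p3"
  unfolding lc_def by (cases p1; cases p2; cases p3; simp)+

lemma smul_lc: "smul3 s (vadd (lin2 x a y b) (smul3 z c)) = lc a b c (s*x, s*y, s*z)"
  unfolding lc_def by (cases a; cases b; cases c) (simp add: algebra_simps)

lemma coords:
  assumes "det3 a b c \<noteq> 0"
  shows "\<exists>x y z. d = lc a b c (x,y,z)"
proof -
  have "smul3 (det3 a b c) d = vadd (lin2 (det3 d b c) a (det3 a d c) b) (smul3 (det3 a b d) c)"
    by (rule cramer)
  then have "smul3 (1 / det3 a b c) (smul3 (det3 a b c) d) = lc a b c (1 / det3 a b c * det3 d b c, 1 / det3 a b c * det3 a d c, 1 / det3 a b c * det3 a b d)"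
    by (simp only: smul_lc)
  moreover have "smul3 (1 / det3 a b c) (smul3 (det3 a b c) d) = d"
    using assms by (simp only: smul3_smul3) simp
  ultimately show ?thesis by metis
qed

lemma bil_lc: "bil k t (lc p1 p2 p3 (x,y,z)) = x * bil k t p1 + y * bil k t p2 + z * bil k t p3"
  unfolding bil_def lc_def by (cases k rule: prod_cases6; cases t; cases p1; cases p2; cases p3) (simp add: algebra_simps)

lemma qform_lc: "qform k (lc p1 p2 p3 (x,y,z)) = x^2 * qform k p1 + y^2 * qform k p2 + z^2 * qform k p3
   + x*y*bil k p1 p2 + x*z*bil k p1 p3 + y*z*bil k p2 p3"
  unfolding bil_def lc_def by (cases k rule: prod_cases6; cases p1; cases p2; cases p3) (simp add: algebra_simps power2_eq_square)

lemma dot_cross_det: "dot3 (cross3 a b) c = det3 a b c"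
  by (cases a; cases b; cases c) (simp add: algebra_simps)

lemma det_cross_nz: "det3 a b c \<noteq> 0 \<Longrightarrow> cross3 a b \<noteq> z3"
  using dot_cross_det[of a b c] by (cases c) auto

definition closedB :: "'a::field vec3 set set \<Rightarrow> bool" where
  "closedB B \<longleftrightarrow> (\<forall>l1 \<in> pg_lines. \<forall>l2 \<in> pg_lines. l1 \<noteq> l2 \<and> 2 \<le> card (l1 \<inter> B) \<and> 2 \<le> card (l2 \<inter> B)
         \<longrightarrow> l1 \<inter> l2 \<subseteq> B)"

lemma two_in_card:
  fixes B :: "'a::{field,finite} vec3 set set"
  assumes "P \<in> L" "P \<in> B" "R \<in> L" "R \<in> B" "P \<noteq> R"
  shows "2 \<le> card (L \<inter> B)"
proof -
  have "card {P, R} \<le> card (L \<inter> B)" using assms by (intro card_mono) auto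
  then show ?thesis using assms(5) by simp
qed

lemma closure_pt:
  fixes B :: "'a::{field,finite} vec3 set set"
  assumes cl: "closedB B"
    and B: "pt a \<in> B" "pt b \<in> B" "pt c \<in> B" "pt d \<in> B"
    and ab: "cross3 a b \<noteq> z3" and cd: "cross3 c d \<noteq> z3" and abc: "det3 a b c \<noteq> 0"
    and x: "x \<noteq> z3" "det3 a b x = 0" "det3 c d x = 0"
  shows "pt x \<in> B"
proof -
  define L1 where "L1 = pg_line (cross3 a b)"
  define L2 where "L2 = pg_line (cross3 c d)"
  have a0: "a \<noteq> z3" "b \<noteq> z3" using ab by (cases a; cases b; auto)+
  have c0: "c \<noteq> z3" "d \<noteq> z3" using cd by (cases c; cases d; auto)+
  have L1: "L1 \<in> pg_lines" "pt a \<in> L1" "pt b \<in> L1" using join_line[OF ab] L1_def by auto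
  have L2: "L2 \<in> pg_lines" "pt c \<in> L2" "pt d \<in> L2" using join_line[OF cd] L2_def by auto
  have "pt a \<noteq> pt b" using pt_eq_iff a0 ab by metis
  then have c1: "2 \<le> card (L1 \<inter> B)" using two_in_card L1 B by metis
  have "pt c \<noteq> pt d" using pt_eq_iff c0 cd by metis
  then have c2: "2 \<le> card (L2 \<inter> B)" using two_in_card L2 B by metis
  have "pt c \<notin> L1" unfolding L1_def using pt_on_line[OF c0(1)] abc by (simp add: dot_cross_det)
  then have "L1 \<noteq> L2" using L2 by blast
  then have "L1 \<inter> L2 \<subseteq> B" using cl c1 c2 L1 L2 unfolding closedB_def by blast
  moreover have "pt x \<in> L1" "pt x \<in> L2" unfolding L1_def L2_def
    using x by (simp_all add: pt_on_line dot_cross_det)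
  ultimately show ?thesis by blast
qed



lemma pascal_poly:
  fixes x1 y1 z1 x2 y2 z2 b12 b13 b23 :: "'a::field"
  shows "det3 (z1*x2 - z2*x1, z1*y2 - z2*y1, 0) (0, y2, z2) (- b13*x1, - b13*y1, y1*b12)
     = - (y2*z2*(x1*y1*b12 + x1*z1*b13 + y1*z1*b23) - y1*z1*(x2*y2*b12 + x2*z2*b13 + y2*z2*b23))"
  by (simp add: algebra_simps)

context conic begin

lemma pascal:
  fixes B :: "'a vec3 set set"
  assumes cl: "closedB B"
    and Q: "qform k p1 = 0" "qform k p2 = 0" "qform k p3 = 0" "qform k p4 = 0" "qform k p5 = 0"
    and cr: "cross3 p1 p2 \<noteq> z3" "cross3 p1 p3 \<noteq> z3" "cross3 p1 p4 \<noteq> z3" "cross3 p1 p5 \<noteq> z3"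
       "cross3 p2 p3 \<noteq> z3" "cross3 p2 p4 \<noteq> z3" "cross3 p2 p5 \<noteq> z3"
       "cross3 p3 p4 \<noteq> z3" "cross3 p3 p5 \<noteq> z3" "cross3 p4 p5 \<noteq> z3"
    and B: "pt p1 \<in> B" "pt p2 \<in> B" "pt p3 \<in> B" "pt p4 \<in> B" "pt p5 \<in> B"
  shows "2 \<le> card (pg_line (mv k p1) \<inter> B)"
proof -
  define D where "D = det3 p1 p2 p3"
  have D: "D \<noteq> 0" unfolding D_def using conic_det Q cr by blast
  define L where "L = lc p1 p2 p3"
  have dL: "det3 (L a) (L b) (L c) = D * det3 a b c" for a b c
    unfolding L_def D_def by (rule det_lc)
  have Le: "L (1,0,0) = p1" "L (0,1,0) = p2" "L (0,0,1) = p3" unfolding L_def by (simp_all add: lc_e)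
  obtain x1 y1 z1 where a4: "p4 = L (x1,y1,z1)" using coords D unfolding D_def L_def by blast
  obtain x2 y2 z2 where a5: "p5 = L (x2,y2,z2)" using coords D unfolding D_def L_def by blast
  define b12 where "b12 = bil k p1 p2"
  define b13 where "b13 = bil k p1 p3"
  define b23 where "b23 = bil k p2 p3"
  have b11: "bil k p1 p1 = 0" using Q by (simp add: bil_self)
  have b12nz: "b12 \<noteq> 0" unfolding b12_def using noline Q cr by blast
  have E4: "x1*y1*b12 + x1*z1*b13 + y1*z1*b23 = 0"
    using Q(4) unfolding a4 L_def qform_lc b12_def b13_def b23_def using Q(1-3) by simp
  have E5: "x2*y2*b12 + x2*z2*b13 + y2*z2*b23 = 0"
    using Q(5) unfolding a5 L_def qform_lc b12_def b13_def b23_def using Q(1-3) by simp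
  have "det3 p1 p2 p4 \<noteq> 0" using conic_det Q cr by blast
  then have z1: "z1 \<noteq> 0" using dL[of "(1,0,0)" "(0,1,0)" "(x1,y1,z1)"] unfolding Le a4[symmetric] by simp
  have "det3 p1 p2 p5 \<noteq> 0" using conic_det Q cr by blast
  then have z2: "z2 \<noteq> 0" using dL[of "(1,0,0)" "(0,1,0)" "(x2,y2,z2)"] unfolding Le a5[symmetric] by simp
  have "det3 p1 p3 p4 \<noteq> 0" using conic_det Q cr by blast
  then have y1: "y1 \<noteq> 0" using dL[of "(1,0,0)" "(0,0,1)" "(x1,y1,z1)"] unfolding Le a4[symmetric] by simp
  have "det3 p2 p3 p5 \<noteq> 0" using conic_det Q cr by blast
  then have x2: "x2 \<noteq> 0" using dL[of "(0,1,0)" "(0,0,1)" "(x2,y2,z2)"] unfolding Le a5[symmetric] by simp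
  have "det3 p3 p4 p5 \<noteq> 0" using conic_det Q cr by blast
  then have m3: "x1*y2 - y1*x2 \<noteq> 0" using dL[of "(0,0,1)" "(x1,y1,z1)" "(x2,y2,z2)"]
    unfolding Le a4[symmetric] a5[symmetric] by simp
  have "det3 p2 p4 p5 \<noteq> 0" using conic_det Q cr by blast
  then have m2: "z1*x2 - x1*z2 \<noteq> 0" using dL[of "(0,1,0)" "(x1,y1,z1)" "(x2,y2,z2)"]
    unfolding Le a4[symmetric] a5[symmetric] by simp
  \<comment> \<open>the Pascal points\<close>
  define Xc where "Xc = (z1*x2 - z2*x1, z1*y2 - z2*y1, 0::'a)"
  define Yc where "Yc = (0::'a, y2, z2)"
  define Zc where "Zc = (- b13*x1, - b13*y1, y1*b12)"
  define X where "X = L Xc"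
  define Y where "Y = L Yc"
  define Z where "Z = L Zc"
  have "det3 X Y p2 = D * det3 Xc Yc (0,1,0)" unfolding X_def Y_def Le(2)[symmetric] by (rule dL)
  also have "det3 Xc Yc (0,1,0) = - z2 * (z1*x2 - z2*x1)" unfolding Xc_def Yc_def by (simp add: algebra_simps)
  finally have dxy: "det3 X Y p2 = D * (- z2 * (z1*x2 - z2*x1))" .
  have "z1*x2 - z2*x1 \<noteq> 0" using m2 by (simp add: mult.commute)
  then have "det3 X Y p2 \<noteq> 0" unfolding dxy using D z2 by simp
  then have XY: "cross3 X Y \<noteq> z3" by (rule det_cross_nz)
  then have X0: "X \<noteq> z3" and Y0: "Y \<noteq> z3" by (cases X; cases Y; auto)+
  have "det3 p1 Z p2 = D * det3 (1,0,0) Zc (0,1,0)" unfolding Z_def Le(1,2)[symmetric] by (rule dL)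
  also have "det3 (1,0,0) Zc (0,1,0) = - y1 * b12" unfolding Zc_def by simp
  finally have "det3 p1 Z p2 \<noteq> 0" using D y1 b12nz by simp
  then have p1Z: "cross3 p1 Z \<noteq> z3" by (rule det_cross_nz)
  then have Z0: "Z \<noteq> z3" by (cases p1) auto
  have "pt X \<in> B"
  proof (rule closure_pt[OF cl B(1,2,4,5) cr(1) cr(10) _ X0])
    show "det3 p1 p2 p4 \<noteq> 0" using conic_det Q cr by blast
    have "det3 p1 p2 X = D * det3 (1,0,0) (0,1,0) Xc" unfolding X_def Le(1,2)[symmetric] by (rule dL)
    then show "det3 p1 p2 X = 0" unfolding Xc_def by simp
    have "det3 p4 p5 X = D * det3 (x1,y1,z1) (x2,y2,z2) Xc" unfolding X_def a4 a5 by (rule dL)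
    then show "det3 p4 p5 X = 0" unfolding Xc_def by (simp add: algebra_simps)
  qed
  have cr51: "cross3 p5 p1 \<noteq> z3" using cr(4) cross_anti by blast
  have "pt Y \<in> B"
  proof (rule closure_pt[OF cl B(2,3,5,1) cr(5) cr51 _ Y0])
    show "det3 p2 p3 p5 \<noteq> 0" using conic_det Q cr by blast
    have "det3 p2 p3 Y = D * det3 (0,1,0) (0,0,1) Yc" unfolding Y_def Le(2,3)[symmetric] by (rule dL)
    then show "det3 p2 p3 Y = 0" unfolding Yc_def by simp
    have "det3 p5 p1 Y = D * det3 (x2,y2,z2) (1,0,0) Yc" unfolding Y_def a5 Le(1)[symmetric] by (rule dL)
    then show "det3 p5 p1 Y = 0" unfolding Yc_def by (simp add: algebra_simps)
  qed
  have "pt Z \<in> B"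
  proof (rule closure_pt[OF cl B(3,4) \<open>pt X \<in> B\<close> \<open>pt Y \<in> B\<close> cr(8) XY _ Z0])
    have "det3 p3 p4 X = D * det3 (0,0,1) (x1,y1,z1) Xc" unfolding X_def a4 Le(3)[symmetric] by (rule dL)
    also have "det3 (0,0,1) (x1,y1,z1) Xc = z1 * (x1*y2 - y1*x2)" unfolding Xc_def by (simp add: algebra_simps)
    finally show "det3 p3 p4 X \<noteq> 0" using D z1 m3 by simp
    have "det3 p3 p4 Z = D * det3 (0,0,1) (x1,y1,z1) Zc" unfolding Z_def a4 Le(3)[symmetric] by (rule dL)
    then show "det3 p3 p4 Z = 0" unfolding Zc_def by (simp add: algebra_simps)
    have "det3 X Y Z = D * det3 Xc Yc Zc" unfolding X_def Y_def Z_def by (rule dL)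
    also have "det3 Xc Yc Zc = - (y2*z2*(x1*y1*b12 + x1*z1*b13 + y1*z1*b23) - y1*z1*(x2*y2*b12 + x2*z2*b13 + y2*z2*b23))"
      unfolding Xc_def Yc_def Zc_def by (rule pascal_poly)
    also have "\<dots> = 0" unfolding E4 E5 by simp
    finally show "det3 X Y Z = 0" by simp
  qed
  have p10: "p1 \<noteq> z3" using cr(1) by (cases p1) auto
  have "pt p1 \<in> pg_line (mv k p1)" using p10 b11 by (simp add: pt_on_line dot_mv)
  moreover have "pt Z \<in> pg_line (mv k p1)"
  proof -
    have "bil k p1 Z = (- b13*x1) * bil k p1 p1 + (- b13*y1) * bil k p1 p2 + (y1*b12) * bil k p1 p3"
      unfolding Z_def L_def Zc_def by (rule bil_lc)
    then have "bil k p1 Z = 0" using b11 unfolding b12_def b13_def by (simp add: algebra_simps)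
    then show ?thesis using Z0 by (simp add: pt_on_line dot_mv)
  qed
  moreover have "pt p1 \<noteq> pt Z" using pt_eq_iff p10 Z0 p1Z by metis
  ultimately show ?thesis using two_in_card B(1) \<open>pt Z \<in> B\<close> by metis
qed

end



lemma join_ex:
  assumes "P \<in> pg_points" "R \<in> pg_points" "P \<noteq> R"
  shows "\<exists>M. M \<in> pg_lines \<and> P \<in> M \<and> R \<in> M"
proof -
  obtain v where v: "v \<noteq> z3" "P = pt v" using assms pg_points_elem by blast
  obtain w where w: "w \<noteq> z3" "R = pt w" using assms pg_points_elem by blast
  have "cross3 v w \<noteq> z3" using pt_eq_iff v w assms(3) by metis
  then show ?thesis using join_line v w by metis
qed

definition jn :: "'a::field vec3 set \<Rightarrow> 'a vec3 set \<Rightarrow> 'a vec3 set set" where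
  "jn P R = (SOME M. M \<in> pg_lines \<and> P \<in> M \<and> R \<in> M)"

lemma jn_prop:
  assumes "P \<in> pg_points" "R \<in> pg_points" "P \<noteq> R"
  shows "jn P R \<in> pg_lines" "P \<in> jn P R" "R \<in> jn P R"
proof -
  have "jn P R \<in> pg_lines \<and> P \<in> jn P R \<and> R \<in> jn P R"
    unfolding jn_def using someI_ex[OF join_ex[OF assms]] .
  then show "jn P R \<in> pg_lines" "P \<in> jn P R" "R \<in> jn P R" by auto
qed

lemma line_meets_B:
  fixes B :: "'a::{field,finite} vec3 set set"
  assumes sub: "subplane_of_order q B" and cardF: "card (UNIV::'a set) = q^2" and q: "q \<ge> 1"
    and L: "L \<in> pg_lines"
  shows "L \<inter> B \<noteq> {}"
proof
  assume LB: "L \<inter> B = {}"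
  note sp = sub[unfolded subplane_of_order_def]
  have Bp: "B \<subseteq> pg_points" by (rule sp[THEN conjunct1])
  have "\<exists>Q \<subseteq> B. card Q = 4 \<and> (\<forall>l \<in> pg_lines. card (l \<inter> Q) \<le> 2)" by (rule sp[THEN conjunct2, THEN conjunct1])
  then obtain Qd where Qd: "Qd \<subseteq> B" "card Qd = 4" "\<forall>l \<in> pg_lines. card (l \<inter> Qd) \<le> 2"
    by blast
  have cl: "closedB B" unfolding closedB_def by (rule sp[THEN conjunct2, THEN conjunct2, THEN conjunct1])
  have cnt: "\<forall>l \<in> pg_lines. 2 \<le> card (l \<inter> B) \<longrightarrow> card (l \<inter> B) = q + 1"
    by (rule sp[THEN conjunct2, THEN conjunct2, THEN conjunct2])
  obtain S3 where "S3 \<subseteq> Qd" "card S3 = 3" using Qd(2) obtain_subset_with_card_n[of 3 Qd] by auto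
  then obtain Q1 Q2 Q3 where Q: "{Q1,Q2,Q3} \<subseteq> Qd" "Q1 \<noteq> Q2" "Q2 \<noteq> Q3" "Q1 \<noteq> Q3"
    by (auto simp: card_3_iff)
  have QB: "Q1 \<in> B" "Q2 \<in> B" "Q3 \<in> B" using Q Qd by auto
  have QP: "Q1 \<in> pg_points" "Q2 \<in> pg_points" "Q3 \<in> pg_points" using QB Bp by auto
  define b where "b = jn Q1 Q2"
  define c where "c = jn Q1 Q3"
  have b: "b \<in> pg_lines" "Q1 \<in> b" "Q2 \<in> b" unfolding b_def using jn_prop[OF QP(1) QP(2) Q(2)] by auto
  have c: "c \<in> pg_lines" "Q1 \<in> c" "Q3 \<in> c" unfolding c_def using jn_prop[OF QP(1) QP(3) Q(4)] by auto
  have "Q3 \<notin> b"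
  proof
    assume "Q3 \<in> b"
    then have "{Q1,Q2,Q3} \<subseteq> b \<inter> Qd" using b Q by auto
    then have "card {Q1,Q2,Q3} \<le> card (b \<inter> Qd)" by (intro card_mono) auto
    moreover have "card {Q1,Q2,Q3} = 3" using Q by simp
    moreover have "card (b \<inter> Qd) \<le> 2" using Qd(3) b(1) by blast
    ultimately show False by linarith
  qed
  then have bc: "b \<noteq> c" using c by blast
  have b2: "2 \<le> card (b \<inter> B)" using two_in_card[OF b(2) QB(1) b(3) QB(2) Q(2)] .
  have c2: "2 \<le> card (c \<inter> B)" using two_in_card[OF c(2) QB(1) c(3) QB(3) Q(4)] .
  have cb: "card (b \<inter> B) = q + 1" using cnt b(1) b2 by blast
  have cc: "card (c \<inter> B) = q + 1" using cnt c(1) c2 by blast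
  define A where "A = c \<inter> B - {Q1}"
  define Dd where "Dd = b \<inter> B - {Q1}"
  have cA: "card A = q" unfolding A_def using cc c QB by (simp add: card_Diff_singleton)
  have cD: "card Dd = q" unfolding Dd_def using cb b QB by (simp add: card_Diff_singleton)
  have Anb: "Y \<notin> b" if "Y \<in> A" for Y
  proof
    assume Yb: "Y \<in> b"
    have "Y \<in> c" "Q1 \<noteq> Y" using that unfolding A_def by auto
    then have "b = c" using unique_line[OF b(1) c(1) b(2) c(2) Yb] by blast
    then show False using bc by simp
  qed
  have Dnc: "X \<notin> c" if "X \<in> Dd" for X
  proof
    assume Xc: "X \<in> c"
    have "X \<in> b" "Q1 \<noteq> X" using that unfolding Dd_def by auto
    then have "b = c" using unique_line[OF b(1) c(1) b(2) c(2) _ Xc] by blast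
    then show False using bc by simp
  qed
  have ADp: "Y \<in> pg_points \<and> Y \<in> B" if "Y \<in> A \<union> Dd" for Y using that Bp unfolding A_def Dd_def by blast
  have jYX: "jn Y X \<in> pg_lines \<and> Y \<in> jn Y X \<and> X \<in> jn Y X \<and> Y \<noteq> X" if "Y \<in> A" "X \<in> Dd" for Y X
  proof -
    have YX: "Y \<noteq> X" using Anb[OF that(1)] that(2) unfolding Dd_def by blast
    have "Y \<in> pg_points" "X \<in> pg_points" using ADp that by blast+
    then show ?thesis using jn_prop[OF _ _ YX] YX by blast
  qed
  define F where "F = (\<lambda>(Y,X). jn Y X) ` (A \<times> Dd)"
  have injF: "inj_on (\<lambda>(Y,X). jn Y X) (A \<times> Dd)"
  proof (rule inj_onI, clarify)
    fix Y X Y' X' assume a: "Y \<in> A" "X \<in> Dd" "Y' \<in> A" "X' \<in> Dd" "jn Y X = jn Y' X'"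
    have j1: "jn Y X \<in> pg_lines" "Y \<in> jn Y X" "X \<in> jn Y X" using jYX a by blast+
    have j2: "Y' \<in> jn Y X" "X' \<in> jn Y X" using jYX[OF a(3,4)] a(5) by auto
    have "Y = Y'"
    proof (rule ccontr)
      assume "Y \<noteq> Y'"
      moreover have "Y \<in> c" "Y' \<in> c" using a unfolding A_def by auto
      ultimately have "jn Y X = c" using unique_line[OF j1(1) c(1) j1(2) _ j2(1)] by blast
      then show False using Dnc[OF a(2)] j1 by simp
    qed
    moreover have "X = X'"
    proof (rule ccontr)
      assume "X \<noteq> X'"
      moreover have "X \<in> b" "X' \<in> b" using a unfolding Dd_def by auto
      ultimately have "jn Y X = b" using unique_line[OF j1(1) b(1) j1(3) _ j2(2)] by blast
      then show False using Anb[OF a(1)] j1 by simp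
    qed
    ultimately show "Y = Y' \<and> X = X'" by simp
  qed
  have cF: "card F = q * q" unfolding F_def using injF cA cD by (simp add: card_image card_cartesian_product)
  have bF: "b \<notin> F"
  proof
    assume "b \<in> F"
    then obtain Y X where YX: "Y \<in> A" "X \<in> Dd" "b = jn Y X" unfolding F_def by blast
    then have "Y \<in> b" using jYX[OF YX(1,2)] by simp
    then show False using Anb[OF YX(1)] by simp
  qed
  have cF': "c \<notin> F"
  proof
    assume "c \<in> F"
    then obtain Y X where YX: "Y \<in> A" "X \<in> Dd" "c = jn Y X" unfolding F_def by blast
    then have "X \<in> c" using jYX[OF YX(1,2)] by simp
    then show False using Dnc[OF YX(2)] by simp
  qed
  define S where "S = insert b (insert c F)"
  have cS: "card S = q * q + 2" unfolding S_def using bF cF' bc cF by simp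
  have Slines: "M \<in> pg_lines \<and> 2 \<le> card (M \<inter> B)" if MS: "M \<in> S" for M
  proof -
    consider "M = b" | "M = c" | "M \<in> F" using MS unfolding S_def by blast
    then show ?thesis
    proof cases
      case 1 then show ?thesis using b(1) b2 by simp
    next
      case 2 then show ?thesis using c(1) c2 by simp
    next
      case 3
      then obtain Y X where YX: "Y \<in> A" "X \<in> Dd" "M = jn Y X" unfolding F_def by blast
      have j: "M \<in> pg_lines" "Y \<in> M" "X \<in> M" "Y \<noteq> X" using jYX[OF YX(1,2)] YX(3) by auto
      have "Y \<in> B" "X \<in> B" using YX ADp by blast+
      then show ?thesis using two_in_card[OF j(2) _ j(3) _ j(4)] j(1) by blast
    qed
  qed
  define \<phi> where "\<phi> = (\<lambda>M. SOME X. X \<in> M \<and> X \<in> L)"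
  have phi: "\<phi> M \<in> M \<and> \<phi> M \<in> L" if "M \<in> pg_lines" for M
    unfolding \<phi>_def using someI_ex[OF lines_meet[OF that L]] .
  have injphi: "inj_on \<phi> S"
  proof (rule inj_onI, rule ccontr)
    fix M1 M2 assume a: "M1 \<in> S" "M2 \<in> S" "\<phi> M1 = \<phi> M2" "M1 \<noteq> M2"
    have m1: "M1 \<in> pg_lines" "2 \<le> card (M1 \<inter> B)" using Slines a(1) by blast+
    have m2: "M2 \<in> pg_lines" "2 \<le> card (M2 \<inter> B)" using Slines a(2) by blast+
    have sB: "M1 \<inter> M2 \<subseteq> B" using cl m1 m2 a(4) unfolding closedB_def by blast
    have X1: "\<phi> M1 \<in> M1" "\<phi> M1 \<in> L" using phi[OF m1(1)] by auto
    have X2: "\<phi> M1 \<in> M2" using phi[OF m2(1)] a(3) by simp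
    have "\<phi> M1 \<in> M1 \<inter> M2" using X1(1) X2 by simp
    then have "\<phi> M1 \<in> B" using sB by blast
    then have "\<phi> M1 \<in> L \<inter> B" using X1(2) by simp
    then show False using LB by simp
  qed
  have subL: "\<phi> ` S \<subseteq> L" using phi Slines by blast
  have "finite L" by simp
  then have "card S \<le> card L" using card_inj_on_le[OF injphi subL] by simp
  moreover obtain l where l: "l \<noteq> z3" "L = pg_line l" using L pg_lines_elem by blast
  moreover have "card L = q^2 + 1" using line_card[OF l(1)] cardF l(2) by simp
  ultimately have "q * q + 2 \<le> q^2 + 1" using cS by simp
  then show False by (simp add: power2_eq_square)
qed



lemma pt_ne_cross: "v \<noteq> z3 \<Longrightarrow> w \<noteq> z3 \<Longrightarrow> pt v \<noteq> pt w \<Longrightarrow> cross3 v w \<noteq> z3"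
  using pt_eq_iff by metis

lemma four_distinct:
  assumes "card S = 4"
  obtains a b c d where "S = {a,b,c,d}" "a \<noteq> b" "a \<noteq> c" "a \<noteq> d" "b \<noteq> c" "b \<noteq> d" "c \<noteq> d"
proof -
  have fin: "finite S" using assms by (metis card.infinite zero_neq_numeral)
  have "S \<noteq> {}" using assms by auto
  then obtain a where a: "a \<in> S" by blast
  have "card (S - {a}) = 3" using assms a fin by (simp add: card_Diff_singleton)
  then obtain b c d where bcd: "S - {a} = {b,c,d}" "b \<noteq> c" "c \<noteq> d" "b \<noteq> d" by (auto simp: card_3_iff)
  have "S = {a,b,c,d}" using bcd(1) a by blast
  moreover have "a \<noteq> b" "a \<noteq> c" "a \<noteq> d" using bcd(1) by blast+
  ultimately show ?thesis using that bcd by blast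
qed

lemma sum_ind: "finite A \<Longrightarrow> (\<Sum>x\<in>A. if P x then 1 else 0 :: nat) = card {x\<in>A. P x}"
  using sum.inter_filter[of A "\<lambda>_. 1::nat" P] by simp

context conic begin

lemma tangent_Bline:
  fixes B :: "'a vec3 set set"
  assumes cl: "closedB B" and R: "R \<in> C \<inter> B" and m5: "5 \<le> card (C \<inter> B)"
  shows "2 \<le> card (pol R \<inter> B)"
proof -
  have "card ((C \<inter> B) - {R}) = card (C \<inter> B) - 1" using R by (simp add: card_Diff_singleton)
  then have "4 \<le> card ((C \<inter> B) - {R})" using m5 by simp
  then obtain S where S: "S \<subseteq> (C \<inter> B) - {R}" "card S = 4" by (meson obtain_subset_with_card_n)
  then obtain P2 P3 P4 P5 where P: "S = {P2,P3,P4,P5}" "P2 \<noteq> P3" "P2 \<noteq> P4" "P2 \<noteq> P5" "P3 \<noteq> P4" "P3 \<noteq> P5" "P4 \<noteq> P5"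
    using four_distinct by metis
  have inS: "P2 \<in> C \<inter> B" "P3 \<in> C \<inter> B" "P4 \<in> C \<inter> B" "P5 \<in> C \<inter> B"
    "R \<noteq> P2" "R \<noteq> P3" "R \<noteq> P4" "R \<noteq> P5" using S P by auto
  obtain p1 where p1: "p1 \<noteq> z3" "R = pt p1" "qform k p1 = 0" using R C_elem by blast
  obtain p2 where p2: "p2 \<noteq> z3" "P2 = pt p2" "qform k p2 = 0" using inS C_elem by blast
  obtain p3 where p3: "p3 \<noteq> z3" "P3 = pt p3" "qform k p3 = 0" using inS C_elem by blast
  obtain p4 where p4: "p4 \<noteq> z3" "P4 = pt p4" "qform k p4 = 0" using inS C_elem by blast
  obtain p5 where p5: "p5 \<noteq> z3" "P5 = pt p5" "qform k p5 = 0" using inS C_elem by blast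
  have "2 \<le> card (pg_line (mv k p1) \<inter> B)"
  proof (rule pascal[OF cl p1(3) p2(3) p3(3) p4(3) p5(3)])
    show "cross3 p1 p2 \<noteq> z3" using pt_ne_cross p1 p2 inS by metis
    show "cross3 p1 p3 \<noteq> z3" using pt_ne_cross p1 p3 inS by metis
    show "cross3 p1 p4 \<noteq> z3" using pt_ne_cross p1 p4 inS by metis
    show "cross3 p1 p5 \<noteq> z3" using pt_ne_cross p1 p5 inS by metis
    show "cross3 p2 p3 \<noteq> z3" using pt_ne_cross p2 p3 P by metis
    show "cross3 p2 p4 \<noteq> z3" using pt_ne_cross p2 p4 P by metis
    show "cross3 p2 p5 \<noteq> z3" using pt_ne_cross p2 p5 P by metis
    show "cross3 p3 p4 \<noteq> z3" using pt_ne_cross p3 p4 P by metis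
    show "cross3 p3 p5 \<noteq> z3" using pt_ne_cross p3 p5 P by metis
    show "cross3 p4 p5 \<noteq> z3" using pt_ne_cross p4 p5 P by metis
    show "pt p1 \<in> B" using R p1 by simp
    show "pt p2 \<in> B" using inS p2 by simp
    show "pt p3 \<in> B" using inS p3 by simp
    show "pt p4 \<in> B" using inS p4 by simp
    show "pt p5 \<in> B" using inS p5 by simp
  qed
  then show ?thesis using pol_pt p1 by simp
qed

lemma main_count:
  fixes B :: "'a vec3 set set"
  assumes sub: "subplane_of_order q B" and cardF: "card (UNIV::'a set) = q^2" and q1: "q \<ge> 1"
  shows "q^2 + 1 + (if 5 \<le> card (C \<inter> B) then card (C \<inter> B) else 0)
           \<le> card (C \<inter> B) + 2 * card (external_points C \<inter> B)"
proof -
  note sp = sub[unfolded subplane_of_order_def]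
  have Bp: "B \<subseteq> pg_points" by (rule sp[THEN conjunct1])
  have cl: "closedB B" unfolding closedB_def by (rule sp[THEN conjunct2, THEN conjunct2, THEN conjunct1])
  define T where "T = {L. tangent_line C L}"
  define tau where "tau = (\<lambda>P. card {L. tangent_line C L \<and> P \<in> L})"
  define E where "E = external_points C"
  define m where "m = card (C \<inter> B)"
  have finT: "finite T" by simp
  have finB: "finite B" by simp
  \<comment> \<open>double counting\<close>
  have s1: "(\<Sum>L\<in>T. card (L \<inter> B)) = (\<Sum>P\<in>B. tau P)"
  proof -
    have a: "card (L \<inter> B) = (\<Sum>P\<in>B. if P \<in> L then 1 else 0)" for L :: "'a vec3 set set"
    proof -
      have "L \<inter> B = {P\<in>B. P \<in> L}" by blast
      then show ?thesis using sum_ind[OF finB, of "\<lambda>P. P \<in> L"] by simp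
    qed
    have b: "tau P = (\<Sum>L\<in>T. if P \<in> L then 1 else 0)" for P
    proof -
      have "{L. tangent_line C L \<and> P \<in> L} = {L\<in>T. P \<in> L}" unfolding T_def by blast
      then show ?thesis unfolding tau_def using sum_ind[OF finT, of "\<lambda>L. P \<in> L"] by simp
    qed
    have "(\<Sum>L\<in>T. card (L \<inter> B)) = (\<Sum>L\<in>T. \<Sum>P\<in>B. if P \<in> L then 1 else 0)" using a by simp
    also have "\<dots> = (\<Sum>P\<in>B. \<Sum>L\<in>T. if P \<in> L then 1 else 0)" by (rule sum.swap)
    also have "\<dots> = (\<Sum>P\<in>B. tau P)" using b by simp
    finally show ?thesis .
  qed
  have s2: "(\<Sum>P\<in>B. tau P) \<le> m + 2 * card (E \<inter> B)"
  proof -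
    have pw: "tau P \<le> (if P \<in> C then 1 else 0) + 2 * (if P \<in> E then 1 else 0)" if PB: "P \<in> B" for P
    proof -
      have Pp: "P \<in> pg_points" using PB Bp by blast
      show ?thesis
      proof (cases "P \<in> C")
        case True then show ?thesis using tau_C unfolding tau_def by simp
      next
        case False
        show ?thesis
        proof (cases "P \<in> E")
          case True
          then have "tau P = 2" unfolding E_def external_points_def tau_def by simp
          then show ?thesis using True False by simp
        next
          case nE: False
          have "tau P \<noteq> 2"
          proof
            assume "tau P = 2"
            then have "P \<in> E" using Pp False unfolding E_def external_points_def tau_def by simp
            then show False using nE by simp
          qed
          then have "tau P = 0" using tau_notC[OF Pp False] unfolding tau_def by simp
          then show ?thesis by simp
        qed
      qed
    qed
    have "(\<Sum>P\<in>B. tau P) \<le> (\<Sum>P\<in>B. (if P \<in> C then 1 else 0) + 2 * (if P \<in> E then 1 else 0))"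
      by (rule sum_mono) (use pw in blast)
    also have "\<dots> = (\<Sum>P\<in>B. if P \<in> C then 1 else 0) + 2 * (\<Sum>P\<in>B. if P \<in> E then 1 else 0)"
      by (simp add: sum.distrib sum_distrib_left)
    also have "(\<Sum>P\<in>B. if P \<in> C then 1 else 0) = m"
    proof -
      have "{P\<in>B. P \<in> C} = C \<inter> B" by blast
      then show ?thesis unfolding m_def using sum_ind[OF finB, of "\<lambda>P. P \<in> C"] by simp
    qed
    also have "(\<Sum>P\<in>B. if P \<in> E then 1 else 0) = card (E \<inter> B)"
    proof -
      have "{P\<in>B. P \<in> E} = E \<inter> B" by blast
      then show ?thesis using sum_ind[OF finB, of "\<lambda>P. P \<in> E"] by simp
    qed
    finally show ?thesis .
  qed
  define T2 where "T2 = {L\<in>T. 2 \<le> card (L \<inter> B)}"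
  have s3: "card T + card T2 \<le> (\<Sum>L\<in>T. card (L \<inter> B))"
  proof -
    have pw: "1 + (if 2 \<le> card (L \<inter> B) then 1 else 0) \<le> card (L \<inter> B)" if LT: "L \<in> T" for L
    proof -
      have "L \<in> pg_lines" using LT unfolding T_def tangent_line_def by simp
      then have "L \<inter> B \<noteq> {}" using line_meets_B[OF sub cardF q1] by blast
      then have "0 < card (L \<inter> B)" by (simp add: card_gt_0_iff)
      then show ?thesis by simp
    qed
    have "(\<Sum>L\<in>T. 1 + (if 2 \<le> card (L \<inter> B) then 1 else 0)) \<le> (\<Sum>L\<in>T. card (L \<inter> B))"
      by (rule sum_mono) (use pw in blast)
    moreover have "(\<Sum>L\<in>T. 1 + (if 2 \<le> card (L \<inter> B) then 1 else 0)) = card T + (\<Sum>L\<in>T. (if 2 \<le> card (L \<inter> B) then 1 else 0))"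
      by (simp only: sum.distrib card_eq_sum)
    moreover have "(\<Sum>L\<in>T. (if 2 \<le> card (L \<inter> B) then 1 else 0)) = card T2"
      unfolding T2_def by (rule sum_ind[OF finT])
    ultimately show ?thesis by simp
  qed
  have s4: "q^2 + 1 \<le> card T" unfolding T_def card_tangents using card_C cardF by simp
  have s5: "(if 5 \<le> m then m else 0) \<le> card T2"
  proof (cases "5 \<le> m")
    case True
    have "pol ` (C \<inter> B) \<subseteq> T2"
    proof
      fix L assume "L \<in> pol ` (C \<inter> B)"
      then obtain R where R: "R \<in> C \<inter> B" "L = pol R" by blast
      have "2 \<le> card (L \<inter> B)" using tangent_Bline[OF cl R(1)] True R(2) unfolding m_def by simp
      moreover have "L \<in> T" unfolding T_def tangent_iff using R by blast
      ultimately show "L \<in> T2" unfolding T2_def by simp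
    qed
    moreover have "inj_on pol (C \<inter> B)" using inj_pol_C by (rule inj_on_subset) blast
    ultimately have "card (C \<inter> B) \<le> card T2" using card_inj_on_le[of pol "C \<inter> B" T2] by simp
    then show ?thesis using True unfolding m_def by simp
  qed simp
  show ?thesis using s1 s2 s3 s4 s5 unfolding m_def E_def by linarith
qed

end



theorem mainTheorem18:
  fixes q :: nat and C B :: "('a::{field,finite}) vec3 set set"
  assumes "prime_power q" and "odd q"
    and "card (UNIV :: 'a set) = q ^ 2"
    and "irreducible_conic C"
    and "subplane_of_order q B"
  shows "real (card (external_points C \<inter> B)) \<ge> (real q ^ 2 - 3) / 2"
proof -
  obtain k where k: "qdet k \<noteq> 0" "C = {pt v | v. v \<noteq> (0, 0, 0) \<and> qform k v = 0}"
    using assms(4) unfolding irreducible_conic_def by blast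
  have CC: "C = Cset k" using k(2) unfolding Cset_def by simp
  have "odd (card (UNIV :: 'a set))" using assms(2,3) by simp
  then have two: "(2::'a) \<noteq> 0" by (rule two_nz_field)
  interpret cc: conic k using k(1) two by unfold_locales
  have q1: "q \<ge> 1" using assms(2) by (cases q) auto
  have mc: "q^2 + 1 + (if 5 \<le> card (C \<inter> B) then card (C \<inter> B) else 0)
           \<le> card (C \<inter> B) + 2 * card (external_points C \<inter> B)"
    unfolding CC by (rule cc.main_count[OF assms(5) assms(3) q1])
  have "q^2 \<le> 2 * card (external_points C \<inter> B) + 3"
    using mc by (cases "5 \<le> card (C \<inter> B)") simp_all
  then have "real (q^2) \<le> real (2 * card (external_points C \<inter> B) + 3)" by (simp only: of_nat_le_iff)
  then show ?thesis by simp
qed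


end
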